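(* Let $P_-:\hat{\mathcal G}^\ast_1\to\mathbb C$, $P_-(\hat{\mathfrak L})=-\frac14(\!(\hat{\mathfrak L},\hat{\mathfrak L})\!)_\phi$, and $\partial_-=\{\cdot,P_-\}_R$. Let $\hat{\mathfrak L}=(\mathfrak L,1)$ where $\mathfrak L$ is the Lax matrix \[ \mathfrak L=4\,\phi(z)^{-1}\sum_{k=1}^\infty z^k\big(k A_1^{(k)}+2(\nabla_1\Pi_1)^{(k)}\big) \] for arbitrary $A_1,\Pi_1\in C^\infty(S^1,\mathfrak g)$, with $\nabla_1=\partial_\sigma-[A_1,\cdot\,]$. Then, although $P_-\notin\mathcal I(\hat{\mathcal G}^\ast_1)$, the flow $\partial_-$ at $\hat{\mathfrak L}$ satisfies \[ \partial_- \mathfrak{L} - \partial_{\sigma} \mathfrak{L}_- = [\mathfrak{L}_-, \mathfrak{L}], \qquad \mathfrak{L}_- = \pi_- \mathfrak{L}. \]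
   Context: Setting: $\mathring{\mathfrak g}$ is a Lie superalgebra with automorphism $\Omega$, $\Omega^4=1$, eigenspaces $\mathring{\mathfrak g}_n$, and a non-degenerate invariant graded-symmetric form with $\langle \mathring{\mathfrak g}_n,\mathring{\mathfrak g}_m\rangle=0$ unless $n+m\equiv0\pmod4$; $\mathfrak g=(\Gamma\otimes\mathring{\mathfrak g})_{\bar0}$ its Grassmann envelope, graded $\mathfrak g=\oplus_{n=0}^3\mathfrak g_n$; for $b\in\mathfrak g$, $b^{(k)}$ is its component in $\mathfrak g_{(k)}$, $(k)=k\bmod4$. $\mathcal L\mathfrak g^\Omega=\bigoplus_{n\in\mathbb Z}\mathfrak g_{(n)}z^n$ (formal Laurent series, finitely many negative powers), $\mathcal L\mathfrak g^\Omega_+=\bigoplus_{n\ge0}$, $\mathcal L\mathfrak g^\Omega_-=\bigoplus_{n<0}$, projections $\pi_\pm$, $R=\pi_+-\pi_-$. $\phi(z)=\frac{16z^4}{(1-z^4)^2}$ (so $\phi^{-1}=\frac1{16}z^4-\frac18+\frac1{16}z^{-4}$), $(X,Y)_\phi=\oint\frac{dz}{2\pi iz}\phi\langle X,Y\rangle$. $\mathcal G=C^\infty(S^1,\mathcal L\mathfrak g^\Omega)$ with $(\!(\mathfrak X,\mathfrak Y)\!)_\phi=\int_{S^1}d\sigma(\mathfrak X,\mathfrak Y)_\phi$, cocycle $\omega(\mathfrak X,\mathfrak Y)=\int d\sigma(\mathfrak X,\partial_\sigma\mathfrak Y)_\phi$; $\hat{\mathcal G}=\mathcal G\oplus\mathbb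 C$ with bracket $[(\mathfrak X,a),(\mathfrak Y,b)]=([\mathfrak X,\mathfrak Y],\omega(\mathfrak X,\mathfrak Y))$, pairing $(\!((\mathfrak X,a),(\mathfrak Y,b))\!)_\phi=(\!(\mathfrak X,\mathfrak Y)\!)_\phi+ab$, smooth dual $\hat{\mathcal G}^\ast\simeq\phi^{-1}\mathcal G\oplus\mathbb C$, $\hat{\mathcal G}^\ast_1=\phi^{-1}\mathcal G\oplus\{1\}$. $R(\mathfrak X,c)=(R\mathfrak X,c)$ ($R$ pointwise in $\sigma$), $R$-bracket $[\hat{\mathfrak X},\hat{\mathfrak Y}]_R=\frac12([R\hat{\mathfrak X},\hat{\mathfrak Y}]+[\hat{\mathfrak X},R\hat{\mathfrak Y}])$. For $f$ a smooth function, $\hat df=(df,c_f)$ is defined by $(\!((\mathfrak X,b),\hat df)\!)_\phi=\frac{d}{dt}|_{t=0}f((\mathfrak L,a)+t(\mathfrak X,b))$. The $R$-bracket of functions is $\frac12\{f,g\}_R(\hat{\mathfrak L})=(\!(\hat{\mathfrak L},[\hat df,\hat dg]_R)\!)_\phi$; the flow $\partial_-$ acts on $\hat{\mathfrak L}$ via $\partial_-(\!(\hat{\mathfrak L},\hat{\mathfrak X})\!)_\phi=\{\hat{\mathfrak X},P_-\}_R(\hat{\mathfrak L})$ for all linear functions. $\mathcal I(\hat{\mathcal G}^\ast_1)$ denotes functions $f$ with $ad^\ast df\cdot\hat{\mathfrak L}=0$ for all $\hat{\mathfrak L}$, where $ad^\ast\mathfrak M\cdot(\mathfrak X,1)=([\mathfrak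 M,\mathfrak X]+\partial_\sigma\mathfrak M,0)$. *)

theory Defs
  imports "HOL-Analysis.Analysis"
begin

text \<open>br = Lie bracket of g, fm = invariant symmetric form (complex valued),
  pr n = projection onto g_(n mod 4), i.e. pr n b = b^(n).\<close>

definition lie_data ::
  "('g::real_normed_vector \<Rightarrow> 'g \<Rightarrow> 'g) \<Rightarrow> ('g \<Rightarrow> 'g \<Rightarrow> complex) \<Rightarrow> (int \<Rightarrow> 'g \<Rightarrow> 'g) \<Rightarrow> bool"
  where "lie_data br fm pr \<longleftrightarrow>
     bounded_bilinear br \<and>
     (\<forall>x y. br x y = - br y x) \<and>
     (\<forall>x y z. br x (br y z) + br y (br z x) + br z (br x y) = 0) \<and>
     bounded_bilinear fm \<and>
     (\<forall>x y. fm x y = fm y x) \<and>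
     (\<forall>x y z. fm (br x y) z = fm x (br y z)) \<and>
     (\<forall>x. (\<forall>y. fm x y = 0) \<longrightarrow> x = 0) \<and>
     (\<forall>n. bounded_linear (pr n)) \<and>
     (\<forall>n m. n mod 4 = m mod 4 \<longrightarrow> pr n = pr m) \<and>
     (\<forall>n x. pr n (pr n x) = pr n x) \<and>
     (\<forall>n m x. n mod 4 \<noteq> m mod 4 \<longrightarrow> pr n (pr m x) = 0) \<and>
     (\<forall>x. pr 0 x + pr 1 x + pr 2 x + pr 3 x = x) \<and>
     (\<forall>n m x y. pr (n + m) (br (pr n x) (pr m y)) = br (pr n x) (pr m y)) \<and>
     (\<forall>n m x y. (n + m) mod 4 \<noteq> 0 \<longrightarrow> fm (pr n x) (pr m y) = 0)"

text \<open>A Laurent series is a coefficient function int => _; products are Cauchy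
  convolutions, which are finite sums when both factors have finitely many negative powers.\<close>

definition conv :: "('a::zero \<Rightarrow> 'b::zero \<Rightarrow> 'c::comm_monoid_add) \<Rightarrow> (int \<Rightarrow> 'a) \<Rightarrow> (int \<Rightarrow> 'b) \<Rightarrow> int \<Rightarrow> 'c"
  where "conv f X Y n = (\<Sum>i \<in> {i. X i \<noteq> 0 \<and> Y (n - i) \<noteq> 0}. f (X i) (Y (n - i)))"

text \<open>phi(z) = 16 z^4/(1-z^4)^2 = sum_{j>=1} 16 j z^(4j), and its inverse
  phi^{-1} = z^4/16 - 1/8 + z^(-4)/16.\<close>

definition phi :: "int \<Rightarrow> real"
  where "phi n = (if 0 < n \<and> 4 dvd n then 16 * real_of_int (n div 4) else 0)"

definition phi_inv :: "int \<Rightarrow> real"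
  where "phi_inv n = (if n = 4 \<or> n = -4 then 1/16 else if n = 0 then -1/8 else 0)"

definition pi_plus :: "(int \<Rightarrow> 'g::zero) \<Rightarrow> int \<Rightarrow> 'g"
  where "pi_plus X n = (if 0 \<le> n then X n else 0)"

definition pi_minus :: "(int \<Rightarrow> 'g::zero) \<Rightarrow> int \<Rightarrow> 'g"
  where "pi_minus X n = (if n < 0 then X n else 0)"

definition Rop :: "(int \<Rightarrow> 'g::ab_group_add) \<Rightarrow> int \<Rightarrow> 'g"
  where "Rop X n = pi_plus X n - pi_minus X n"

definition phi_pair :: "('g::zero \<Rightarrow> 'g \<Rightarrow> complex) \<Rightarrow> (int \<Rightarrow> 'g) \<Rightarrow> (int \<Rightarrow> 'g) \<Rightarrow> complex"
  where "phi_pair fm X Y = conv (\<lambda>a c. complex_of_real a * c) phi (conv fm X Y) 0"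

type_synonym 'g loopf = "real \<Rightarrow> int \<Rightarrow> 'g"

definition smooth_fun :: "(real \<Rightarrow> 'a::real_normed_vector) \<Rightarrow> bool"
  where "smooth_fun f \<longleftrightarrow> (\<exists>D. D 0 = f \<and> (\<forall>k t. (D k has_vector_derivative D (Suc k) t) (at t)))"

definition smooth_S1 :: "(real \<Rightarrow> 'a::real_normed_vector) \<Rightarrow> bool"
  where "smooth_S1 f \<longleftrightarrow> smooth_fun f \<and> (\<forall>s. f (s + 2 * pi) = f s)"

text \<open>G = C^infty(S^1, L g^Omega): coefficientwise smooth, graded coefficients,
  uniformly finitely many negative powers.\<close>
definition in_G :: "(int \<Rightarrow> 'g \<Rightarrow> 'g) \<Rightarrow> 'g::real_normed_vector loopf \<Rightarrow> bool"
  where "in_G pr X \<longleftrightarrow> (\<exists>N. \<forall>s n. n < N \<longrightarrow> X s n = 0) \<and>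
                      (\<forall>s n. pr n (X s n) = X s n) \<and>
                      (\<forall>n. smooth_S1 (\<lambda>s. X s n))"

definition dsig :: "'g::real_normed_vector loopf \<Rightarrow> 'g loopf"
  where "dsig X = (\<lambda>s n. vector_derivative (\<lambda>t. X t n) (at s))"

definition Gbr :: "('g \<Rightarrow> 'g \<Rightarrow> 'g::real_normed_vector) \<Rightarrow> 'g loopf \<Rightarrow> 'g loopf \<Rightarrow> 'g loopf"
  where "Gbr br X Y = (\<lambda>s. conv br (X s) (Y s))"

definition GR :: "'g::real_normed_vector loopf \<Rightarrow> 'g loopf"
  where "GR X = (\<lambda>s. Rop (X s))"

definition Gpair :: "('g \<Rightarrow> 'g \<Rightarrow> complex) \<Rightarrow> 'g::real_normed_vector loopf \<Rightarrow> 'g loopf \<Rightarrow> complex"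
  where "Gpair fm X Y = integral {0..2*pi} (\<lambda>s. phi_pair fm (X s) (Y s))"

definition omega :: "('g \<Rightarrow> 'g \<Rightarrow> complex) \<Rightarrow> 'g::real_normed_vector loopf \<Rightarrow> 'g loopf \<Rightarrow> complex"
  where "omega fm X Y = Gpair fm X (dsig Y)"

type_synonym 'g hat = "'g loopf \<times> complex"

definition in_Ghat :: "(int \<Rightarrow> 'g \<Rightarrow> 'g) \<Rightarrow> 'g::real_normed_vector hat \<Rightarrow> bool"
  where "in_Ghat pr Xh \<longleftrightarrow> in_G pr (fst Xh)"

definition hadd :: "'g::real_normed_vector hat \<Rightarrow> 'g hat \<Rightarrow> 'g hat"
  where "hadd Xh Yh = ((\<lambda>s n. fst Xh s n + fst Yh s n), snd Xh + snd Yh)"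

definition hscale :: "real \<Rightarrow> 'g::real_normed_vector hat \<Rightarrow> 'g hat"
  where "hscale t Xh = ((\<lambda>s n. t *\<^sub>R fst Xh s n), complex_of_real t * snd Xh)"

definition hbr :: "('g \<Rightarrow> 'g \<Rightarrow> 'g) \<Rightarrow> ('g \<Rightarrow> 'g \<Rightarrow> complex) \<Rightarrow> 'g::real_normed_vector hat \<Rightarrow> 'g hat \<Rightarrow> 'g hat"
  where "hbr br fm Xh Yh = (Gbr br (fst Xh) (fst Yh), omega fm (fst Xh) (fst Yh))"

definition hpair :: "('g \<Rightarrow> 'g \<Rightarrow> complex) \<Rightarrow> 'g::real_normed_vector hat \<Rightarrow> 'g hat \<Rightarrow> complex"
  where "hpair fm Xh Yh = Gpair fm (fst Xh) (fst Yh) + snd Xh * snd Yh"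

definition hR :: "'g::real_normed_vector hat \<Rightarrow> 'g hat"
  where "hR Xh = (GR (fst Xh), snd Xh)"

definition hRbr :: "('g \<Rightarrow> 'g \<Rightarrow> 'g) \<Rightarrow> ('g \<Rightarrow> 'g \<Rightarrow> complex) \<Rightarrow> 'g::real_normed_vector hat \<Rightarrow> 'g hat \<Rightarrow> 'g hat"
  where "hRbr br fm Xh Yh = hscale (1/2) (hadd (hbr br fm (hR Xh) Yh) (hbr br fm Xh (hR Yh)))"

definition is_hgrad :: "(int \<Rightarrow> 'g \<Rightarrow> 'g) \<Rightarrow> ('g \<Rightarrow> 'g \<Rightarrow> complex) \<Rightarrow> ('g::real_normed_vector hat \<Rightarrow> complex) \<Rightarrow> 'g hat \<Rightarrow> 'g hat \<Rightarrow> bool"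
  where "is_hgrad pr fm f Lh D \<longleftrightarrow> in_Ghat pr D \<and>
     (\<forall>Xh. in_Ghat pr Xh \<longrightarrow>
        ((\<lambda>t. f (hadd Lh (hscale t Xh))) has_vector_derivative hpair fm Xh D) (at 0))"

definition hgrad :: "(int \<Rightarrow> 'g \<Rightarrow> 'g) \<Rightarrow> ('g \<Rightarrow> 'g \<Rightarrow> complex) \<Rightarrow> ('g::real_normed_vector hat \<Rightarrow> complex) \<Rightarrow> 'g hat \<Rightarrow> 'g hat"
  where "hgrad pr fm f Lh = (THE D. is_hgrad pr fm f Lh D)"

definition Rpoisson :: "('g \<Rightarrow> 'g \<Rightarrow> 'g) \<Rightarrow> ('g \<Rightarrow> 'g \<Rightarrow> complex) \<Rightarrow> (int \<Rightarrow> 'g \<Rightarrow> 'g) \<Rightarrow>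
    ('g::real_normed_vector hat \<Rightarrow> complex) \<Rightarrow> ('g hat \<Rightarrow> complex) \<Rightarrow> 'g hat \<Rightarrow> complex"
  where "Rpoisson br fm pr f g Lh = 2 * hpair fm Lh (hRbr br fm (hgrad pr fm f Lh) (hgrad pr fm g Lh))"

definition P_minus :: "('g \<Rightarrow> 'g \<Rightarrow> complex) \<Rightarrow> 'g::real_normed_vector hat \<Rightarrow> complex"
  where "P_minus fm Lh = - (1/4) * hpair fm Lh Lh"

definition lax :: "('g \<Rightarrow> 'g \<Rightarrow> 'g) \<Rightarrow> (int \<Rightarrow> 'g \<Rightarrow> 'g) \<Rightarrow> (real \<Rightarrow> 'g) \<Rightarrow> (real \<Rightarrow> 'g) \<Rightarrow> 'g::real_normed_vector loopf"
  where "lax br pr A Pim = (\<lambda>s n. 4 *\<^sub>R conv (\<lambda>a x. a *\<^sub>R x) phi_inv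
     (\<lambda>k. if 1 \<le> k then real_of_int k *\<^sub>R pr k (A s)
              + 2 *\<^sub>R pr k (vector_derivative Pim (at s) - br (A s) (Pim s)) else 0) n)"

end

theory Submission
  imports Defs
begin

definition lb :: "(int \<Rightarrow> 'a::zero) \<Rightarrow> int \<Rightarrow> bool" where "lb X N \<longleftrightarrow> (\<forall>n<N. X n = 0)"

lemma lb_mono: "lb X N \<Longrightarrow> M \<le> N \<Longrightarrow> lb X M"
  unfolding lb_def by auto

lemma conv_interval:
  assumes "lb X N1" "lb Y N2" "\<And>y. f 0 y = 0" "\<And>x. f x 0 = 0"
  shows "conv f X Y n = (\<Sum>i\<in>{N1..n-N2}. f (X i) (Y (n-i)))"
  unfolding conv_def
proof (rule sum.mono_neutral_left)
  show "{i. X i \<noteq> 0 \<and> Y (n - i) \<noteq> 0} \<subseteq> {N1..n - N2}"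
    using assms(1,2) unfolding lb_def by (force simp: not_less[symmetric])
qed (use assms in auto)

lemma conv_lb:
  assumes "lb X N1" "lb Y N2" "\<And>y. f 0 y = 0" "\<And>x. f x 0 = 0"
  shows "lb (conv f X Y) (N1+N2)"
  unfolding lb_def using conv_interval[of X N1 Y N2 f, OF assms] by auto

lemma conv_swap: "conv f X Y n = conv (\<lambda>y x. f x y) Y X n"
  unfolding conv_def
  by (rule sum.reindex_bij_witness[of _ "\<lambda>i. n - i" "\<lambda>i. n - i"]) auto

lemma lb_phi: "lb phi 1"
  unfolding lb_def phi_def by auto

definition pp where
  "pp fm N X Y = (\<Sum>i\<in>{1..-2*N}. complex_of_real (phi i) * (\<Sum>j\<in>{N..-i-N}. fm (X j) (Y (-i-j))))"

lemma phi_pair_pp: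
  assumes "lb X N" "lb Y N" "\<And>y. fm 0 y = 0" "\<And>x. fm x 0 = 0"
  shows "phi_pair fm X Y = pp fm N X Y"
proof -
  have c: "lb (conv fm X Y) (N+N)" by (rule conv_lb[of X N Y N fm, OF assms])
  have "phi_pair fm X Y = (\<Sum>i\<in>{1..0-(N+N)}. complex_of_real (phi i) * conv fm X Y (0-i))"
    unfolding phi_pair_def by (rule conv_interval[of phi 1 "conv fm X Y" "N+N", OF lb_phi c]) auto
  also have "\<dots> = pp fm N X Y" unfolding pp_def
    by (rule sum.cong) (auto simp: conv_interval[of X N Y N fm, OF assms] algebra_simps)
  finally show ?thesis .
qed

lemma lb_comb: fixes X :: "int \<Rightarrow> 'a::real_vector" shows "lb X N \<Longrightarrow> lb X' N \<Longrightarrow> lb (\<lambda>n. a *\<^sub>R X n + b *\<^sub>R X' n) N"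
  unfolding lb_def by auto

lemma conv_lin_left:
  assumes f: "bounded_bilinear f" and "lb X N" "lb X' N" "lb Y N"
  shows "conv f (\<lambda>n. a *\<^sub>R X n + b *\<^sub>R X' n) Y m = a *\<^sub>R conv f X Y m + b *\<^sub>R conv f X' Y m"
proof -
  interpret bounded_bilinear f by (rule f)
  have z: "\<And>y. f 0 y = 0" "\<And>x. f x 0 = 0" by (auto simp: zero_left zero_right)
  show ?thesis
    apply (subst conv_interval[of _ N Y N f, OF lb_comb[OF assms(2,3)] assms(4) z])
    apply (subst conv_interval[of X N Y N f, OF assms(2,4) z])
    apply (subst conv_interval[of X' N Y N f, OF assms(3,4) z])
    by (simp add: add_left scaleR_left sum.distrib scaleR_sum_right)
qed

lemma conv_lin_right:
  assumes f: "bounded_bilinear f" and "lb X N" "lb Y N" "lb Y' N"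
  shows "conv f X (\<lambda>n. a *\<^sub>R Y n + b *\<^sub>R Y' n) m = a *\<^sub>R conv f X Y m + b *\<^sub>R conv f X Y' m"
proof -
  interpret bounded_bilinear f by (rule f)
  have z: "\<And>y. f 0 y = 0" "\<And>x. f x 0 = 0" by (auto simp: zero_left zero_right)
  show ?thesis
    apply (subst conv_interval[of X N _ N f, OF assms(2) lb_comb[OF assms(3,4)] z])
    apply (subst conv_interval[of X N Y N f, OF assms(2,3) z])
    apply (subst conv_interval[of X N Y' N f, OF assms(2,4) z])
    by (simp add: add_right scaleR_right sum.distrib scaleR_sum_right)
qed

lemma phi_pair_alt: "phi_pair fm X Y = conv scaleR phi (conv fm X Y) 0"
proof -
  have "(\<lambda>a c. complex_of_real a * c) = scaleR" by (auto simp: fun_eq_iff scaleR_conv_of_real)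
  then show ?thesis unfolding phi_pair_def by simp
qed

lemma phi_pair_lin_left:
  assumes f: "bounded_bilinear fm" and "lb X N" "lb X' N" "lb Y N"
  shows "phi_pair fm (\<lambda>n. a *\<^sub>R X n + b *\<^sub>R X' n) Y = a *\<^sub>R phi_pair fm X Y + b *\<^sub>R phi_pair fm X' Y"
proof -
  interpret bounded_bilinear fm by (rule f)
  have z: "\<And>y. fm 0 y = 0" "\<And>x. fm x 0 = 0" by (auto simp: zero_left zero_right)
  have e: "conv fm (\<lambda>n. a *\<^sub>R X n + b *\<^sub>R X' n) Y = (\<lambda>m. a *\<^sub>R conv fm X Y m + b *\<^sub>R conv fm X' Y m)"
    using conv_lin_left[OF f assms(2-4)] by auto
  have l1: "lb (conv fm X Y) (min 1 (N+N))"
    by (rule lb_mono[OF conv_lb[of X N Y N fm, OF assms(2,4) z]]) auto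
  have l2: "lb (conv fm X' Y) (min 1 (N+N))"
    by (rule lb_mono[OF conv_lb[of X' N Y N fm, OF assms(3,4) z]]) auto
  have l0: "lb phi (min 1 (N+N))" by (rule lb_mono[OF lb_phi]) auto
  show ?thesis unfolding phi_pair_alt e
    by (rule conv_lin_right[OF bounded_bilinear_scaleR l0 l1 l2])
qed

lemma phi_pair_sym:
  assumes "\<And>x y. fm x y = fm y x"
  shows "phi_pair fm X Y = phi_pair fm Y X"
proof -
  have "conv fm X Y = conv fm Y X"
    by (rule ext, subst conv_swap) (simp add: assms)
  then show ?thesis unfolding phi_pair_def by simp
qed

lemma conv_antisym:
  fixes br :: "'a::zero \<Rightarrow> 'a \<Rightarrow> 'b::ab_group_add"
  assumes "\<And>x y. br x y = - br y x"
  shows "conv br X Y m = - conv br Y X m"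
proof -
  have "conv br X Y m = conv (\<lambda>y x. br x y) Y X m" by (rule conv_swap)
  also have "\<dots> = - conv br Y X m" unfolding conv_def
    by (subst sum_negf[symmetric]) (intro sum.cong refl assms)
  finally show ?thesis .
qed

lemma conv_invariant:
  assumes br: "bounded_bilinear br" and fm: "bounded_bilinear fm"
    and inv: "\<And>x y z. fm (br x y) z = fm x (br y z)"
    and "lb A N" "lb B N" "lb C N"
  shows "conv fm A (conv br B C) m = conv fm (conv br A B) C m"
proof -
  interpret b: bounded_bilinear br by (rule br)
  interpret f: bounded_bilinear fm by (rule fm)
  have zb: "\<And>y. br 0 y = 0" "\<And>x. br x 0 = 0" by (auto simp: b.zero_left b.zero_right)
  have zf: "\<And>y. fm 0 y = 0" "\<And>x. fm x 0 = 0" by (auto simp: f.zero_left f.zero_right)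
  have lBC: "lb (conv br B C) (N+N)" by (rule conv_lb[of B N C N br, OF assms(5,6) zb])
  have lAB: "lb (conv br A B) (N+N)" by (rule conv_lb[of A N B N br, OF assms(4,5) zb])
  have "conv fm A (conv br B C) m = (\<Sum>j\<in>{N..m-(N+N)}. fm (A j) (conv br B C (m-j)))"
    by (rule conv_interval[of A N "conv br B C" "N+N" fm, OF assms(4) lBC zf])
  also have "\<dots> = (\<Sum>j\<in>{N..m-(N+N)}. \<Sum>a\<in>{N..m-j-N}. fm (A j) (br (B a) (C (m-j-a))))"
    by (simp add: conv_interval[of B N C N br, OF assms(5,6) zb] f.sum_right)
  also have "\<dots> = (\<Sum>(j,a)\<in>(SIGMA j:{N..m-(N+N)}. {N..m-j-N}). fm (A j) (br (B a) (C (m-j-a))))"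
    by (rule sum.Sigma) auto
  also have "\<dots> = (\<Sum>(b,j)\<in>(SIGMA b:{N+N..m-N}. {N..b-N}). fm (br (A j) (B (b-j))) (C (m-b)))"
    by (rule sum.reindex_bij_witness[of _ "\<lambda>(b,j). (j, b-j)" "\<lambda>(j,a). (j+a, j)"])
       (auto simp: inv algebra_simps)
  also have "\<dots> = (\<Sum>b\<in>{N+N..m-N}. \<Sum>j\<in>{N..b-N}. fm (br (A j) (B (b-j))) (C (m-b)))"
    by (rule sum.Sigma[symmetric]) auto
  also have "\<dots> = (\<Sum>b\<in>{N+N..m-N}. fm (conv br A B b) (C (m-b)))"
    by (simp add: conv_interval[of A N B N br, OF assms(4,5) zb] f.sum_left)
  also have "\<dots> = conv fm (conv br A B) C m"
    by (rule conv_interval[of "conv br A B" "N+N" C N fm, OF lAB assms(6) zf, symmetric])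
  finally show ?thesis .
qed



lemma lb_pi_minus: "lb X N \<Longrightarrow> lb (pi_minus X) N" unfolding lb_def pi_minus_def by auto
lemma lb_pi_plus: "lb X N \<Longrightarrow> lb (pi_plus X) N" unfolding lb_def pi_plus_def by auto
lemma lb_Rop: "lb X N \<Longrightarrow> lb (Rop X) N" unfolding lb_def Rop_def pi_plus_def pi_minus_def by auto
lemma lb_scale: fixes X :: "int \<Rightarrow> 'a::real_vector" shows "lb X N \<Longrightarrow> lb (\<lambda>n. c *\<^sub>R X n) N" unfolding lb_def by auto
lemma lb_add: fixes X :: "int \<Rightarrow> 'a::real_vector" shows "lb X N \<Longrightarrow> lb Y N \<Longrightarrow> lb (\<lambda>n. X n + Y n) N" unfolding lb_def by auto

locale LD =
  fixes br :: "'g::real_normed_vector \<Rightarrow> 'g \<Rightarrow> 'g" and fm :: "'g \<Rightarrow> 'g \<Rightarrow> complex"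
    and pr :: "int \<Rightarrow> 'g \<Rightarrow> 'g"
  assumes LD: "lie_data br fm pr"
begin

lemma bb: "bounded_bilinear br" using LD unfolding lie_data_def by blast
lemma bf: "bounded_bilinear fm" using LD unfolding lie_data_def by blast
lemma anti: "br x y = - br y x" using LD unfolding lie_data_def by (elim conjE) metis
lemma fsym: "fm x y = fm y x" using LD unfolding lie_data_def by (elim conjE) metis
lemma finv: "fm (br x y) z = fm x (br y z)" using LD unfolding lie_data_def by (elim conjE) metis
lemma nondeg: "(\<And>y. fm x y = 0) \<Longrightarrow> x = 0" using LD unfolding lie_data_def by blast
lemma prl: "bounded_linear (pr n)" using LD unfolding lie_data_def by blast
lemma prmod: "n mod 4 = m mod 4 \<Longrightarrow> pr n = pr m" using LD unfolding lie_data_def by blast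
lemma pridem: "pr n (pr n x) = pr n x" using LD unfolding lie_data_def by blast
lemma prsum: "pr 0 x + pr 1 x + pr 2 x + pr 3 x = x" using LD unfolding lie_data_def by blast
lemma fgr: "(n + m) mod 4 \<noteq> 0 \<Longrightarrow> fm (pr n x) (pr m y) = 0" using LD unfolding lie_data_def by blast

lemma br0: "br 0 y = 0" "br x 0 = 0"
  using bounded_bilinear.zero_left[OF bb] bounded_bilinear.zero_right[OF bb] by auto
lemma fm0: "fm 0 y = 0" "fm x 0 = 0"
  using bounded_bilinear.zero_left[OF bf] bounded_bilinear.zero_right[OF bf] by auto

lemma lb_conv: "lb X N \<Longrightarrow> lb Y N \<Longrightarrow> lb (conv br X Y) (N+N)"
  by (rule conv_lb[of X N Y N br]) (auto simp: br0)

abbreviation P where "P \<equiv> phi_pair fm"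

lemma P_sym: "P X Y = P Y X" by (rule phi_pair_sym) (rule fsym)

lemma P_add_left: "lb X N \<Longrightarrow> lb Y N \<Longrightarrow> lb Z N \<Longrightarrow> P (\<lambda>n. X n + Y n) Z = P X Z + P Y Z"
  using phi_pair_lin_left[OF bf, of X N Y Z 1 1] by simp
lemma P_diff_left: "lb X N \<Longrightarrow> lb Y N \<Longrightarrow> lb Z N \<Longrightarrow> P (\<lambda>n. X n - Y n) Z = P X Z - P Y Z"
  using phi_pair_lin_left[OF bf, of X N Y Z 1 "-1"] by simp
lemma P_scale_left: "lb X N \<Longrightarrow> lb Z N \<Longrightarrow> P (\<lambda>n. c *\<^sub>R X n) Z = c *\<^sub>R P X Z"
  using phi_pair_lin_left[OF bf, of X N X Z c 0] by simp
lemma P_add_right: "lb X N \<Longrightarrow> lb Y N \<Longrightarrow> lb Z N \<Longrightarrow> P Z (\<lambda>n. X n + Y n) = P Z X + P Z Y"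
  using P_add_left[of X N Y Z] by (simp add: P_sym[of Z])
lemma P_diff_right: "lb X N \<Longrightarrow> lb Y N \<Longrightarrow> lb Z N \<Longrightarrow> P Z (\<lambda>n. X n - Y n) = P Z X - P Z Y"
  using P_diff_left[of X N Y Z] by (simp add: P_sym[of Z])
lemma P_scale_right: "lb X N \<Longrightarrow> lb Z N \<Longrightarrow> P Z (\<lambda>n. c *\<^sub>R X n) = c *\<^sub>R P Z X"
  using P_scale_left[of X N Z c] by (simp add: P_sym[of Z])

lemma C_scale_right: "lb X N \<Longrightarrow> lb Y N \<Longrightarrow> conv br X (\<lambda>n. c *\<^sub>R Y n) m = c *\<^sub>R conv br X Y m"
  using conv_lin_right[OF bb, of X N Y Y c 0 m] by simp
lemma C_add_right: "lb X N \<Longrightarrow> lb Y N \<Longrightarrow> lb Y' N \<Longrightarrow> conv br X (\<lambda>n. Y n + Y' n) m = conv br X Y m + conv br X Y' m"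
  using conv_lin_right[OF bb, of X N Y Y' 1 1 m] by simp

lemma P_inv: "lb A N \<Longrightarrow> lb B N \<Longrightarrow> lb C N \<Longrightarrow> P A (conv br B C) = P (conv br A B) C"
proof -
  assume a: "lb A N" "lb B N" "lb C N"
  have "conv fm A (conv br B C) = conv fm (conv br A B) C"
    by (rule ext) (rule conv_invariant[OF bb bf finv a])
  then show ?thesis unfolding phi_pair_def by simp
qed

lemma P_BL_zero:
  assumes "lb L N" "lb Y N"
  shows "P L (conv br Y L) = 0"
proof -
  have m: "lb L (min N (N+N))" "lb Y (min N (N+N))"
    using assms by (auto simp: lb_def)
  have lc: "lb (conv br Y L) (min N (N+N))" "lb (conv br L Y) (min N (N+N))"
    using lb_conv[of Y N L] lb_conv[of L N Y] assms by (auto simp: lb_def)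
  have "P L (conv br Y L) = P (conv br L Y) L" by (rule P_inv[OF assms(1) assms(2) assms(1)])
  also have "\<dots> = P L (conv br L Y)" by (rule P_sym)
  also have "conv br L Y = (\<lambda>n. (-1) *\<^sub>R conv br Y L n)"
  proof
    fix n show "conv br L Y n = (-1) *\<^sub>R conv br Y L n"
      using conv_antisym[of br, OF anti, of L Y n] by simp
  qed
  also have "P L \<dots> = (-1) *\<^sub>R P L (conv br Y L)"
    by (rule P_scale_right[OF lc(1) m(1)])
  finally show ?thesis by simp
qed

lemma P_plus_zero:
  assumes "lb l (-3)"
  shows "P (pi_plus X) l = 0"
proof -
  have lX: "lb (pi_plus X) (-3)" unfolding lb_def pi_plus_def by auto
  have "P (pi_plus X) l = pp fm (-3) (pi_plus X) l"
    by (rule phi_pair_pp[OF lX assms]) (auto simp: fm0)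
  also have "\<dots> = 0" unfolding pp_def
  proof (rule sum.neutral, rule ballI)
    fix i assume i: "i \<in> {1..-2*(-3::int)}"
    show "complex_of_real (phi i) * (\<Sum>j\<in>{-3..-i- -3}. fm (pi_plus X j) (l (-i-j))) = 0"
    proof (cases "i = 4")
      case True
      then show ?thesis by (auto simp: pi_plus_def fm0 intro!: sum.neutral)
    next
      case False
      with i have "phi i = 0" unfolding phi_def by auto
      then show ?thesis by simp
    qed
  qed
  finally show ?thesis .
qed


lemma Rop_scale: fixes X :: "int \<Rightarrow> 'a::real_vector" shows "Rop (\<lambda>n. c *\<^sub>R X n) = (\<lambda>n. c *\<^sub>R X n + (-2*c) *\<^sub>R pi_minus X n)"
proof (rule ext)
  fix n
  have e: "c *\<^sub>R X n + (-2*c) *\<^sub>R X n = - (c *\<^sub>R X n)"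
  proof -
    have "c *\<^sub>R X n + (-2*c) *\<^sub>R X n = (c + (-2*c)) *\<^sub>R X n" by (simp only: scaleR_add_left)
    also have "\<dots> = - (c *\<^sub>R X n)" by simp
    finally show ?thesis .
  qed
  show "Rop (\<lambda>n. c *\<^sub>R X n) n = c *\<^sub>R X n + (-2*c) *\<^sub>R pi_minus X n"
    using e by (auto simp: Rop_def pi_plus_def pi_minus_def)
qed

lemma pw_main:
  assumes N: "N \<le> -3" and lL: "lb L N" and lX: "lb X N" and ll: "lb l (-3)"
  shows "P (\<lambda>n. pi_minus l n + conv br (pi_minus L) L n) X =
     2 * P L (\<lambda>n. (1/2) *\<^sub>R (conv br (Rop X) (\<lambda>n. -(1/2) *\<^sub>R L n) n
                 + conv br X (Rop (\<lambda>n. -(1/2) *\<^sub>R L n)) n))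
     + P (Rop X) (\<lambda>n. -(1/2) *\<^sub>R l n) + P X (Rop (\<lambda>n. -(1/2) *\<^sub>R l n))"
proof -
  define M where "M = N + N"
  have MN: "M \<le> N" using N unfolding M_def by simp
  have dn: "\<And>Z. lb Z N \<Longrightarrow> lb Z M" using lb_mono MN by blast
  have lN: "lb l N" using ll N lb_mono by blast
  note bs = lL lX lN lb_pi_minus[OF lL] lb_pi_minus[OF lX] lb_pi_plus[OF lX] lb_pi_minus[OF lN]
     lb_Rop[OF lX]
  have bM: "lb L M" "lb X M" "lb l M" "lb (pi_minus L) M" "lb (pi_minus X) M" "lb (pi_plus X) M"
     "lb (pi_minus l) M" "lb (Rop X) M" using bs dn by auto
  have cM: "\<And>A B. lb A N \<Longrightarrow> lb B N \<Longrightarrow> lb (conv br A B) M"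
    unfolding M_def by (rule lb_conv)
  define Lm where "Lm = pi_minus L"
  define lm where "lm = pi_minus l"
  have e1: "(\<lambda>n. conv br (Rop X) (\<lambda>n. -(1/2) *\<^sub>R L n) n) = (\<lambda>n. (-(1/2)) *\<^sub>R conv br (Rop X) L n)"
    by (rule ext) (rule C_scale_right[OF bs(8) bs(1)])
  have e2: "(\<lambda>n. conv br X (Rop (\<lambda>n. -(1/2) *\<^sub>R L n)) n)
       = (\<lambda>n. (-(1/2)) *\<^sub>R conv br X L n + conv br X Lm n)"
  proof
    fix n
    have "conv br X (Rop (\<lambda>n. -(1/2) *\<^sub>R L n)) n = conv br X (\<lambda>n. (-(1/2)) *\<^sub>R L n + 1 *\<^sub>R Lm n) n"
      unfolding Rop_scale Lm_def by simp
    also have "\<dots> = (-(1/2)) *\<^sub>R conv br X L n + 1 *\<^sub>R conv br X Lm n"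
      by (rule conv_lin_right[OF bb bs(2) bs(1)]) (use bs in \<open>simp add: Lm_def\<close>)
    finally show "conv br X (Rop (\<lambda>n. -(1/2) *\<^sub>R L n)) n = (-(1/2)) *\<^sub>R conv br X L n + conv br X Lm n"
      by simp
  qed
  have z1: "P L (conv br (Rop X) L) = 0" by (rule P_BL_zero[OF bs(1) bs(8)])
  have z2: "P L (conv br X L) = 0" by (rule P_BL_zero[OF bs(1) bs(2)])
  have i1: "P L (conv br X Lm) = P (conv br Lm L) X"
  proof -
    have "P L (conv br X Lm) = P (conv br L X) Lm" unfolding Lm_def by (rule P_inv[OF bs(1,2,4)])
    also have "\<dots> = P Lm (conv br L X)" by (rule P_sym)
    also have "\<dots> = P (conv br Lm L) X" unfolding Lm_def by (rule P_inv[OF bs(4,1,2)])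
    finally show ?thesis .
  qed
  have W: "P L (\<lambda>n. (1/2) *\<^sub>R (conv br (Rop X) (\<lambda>n. -(1/2) *\<^sub>R L n) n
                 + conv br X (Rop (\<lambda>n. -(1/2) *\<^sub>R L n)) n))
      = (1/2) *\<^sub>R P (conv br Lm L) X"
  proof -
    have r: "(\<lambda>n. (1/2) *\<^sub>R (conv br (Rop X) (\<lambda>n. -(1/2) *\<^sub>R L n) n
                 + conv br X (Rop (\<lambda>n. -(1/2) *\<^sub>R L n)) n))
       = (\<lambda>n. (1/2) *\<^sub>R ((\<lambda>n. (-(1/2)) *\<^sub>R conv br (Rop X) L n + (-(1/2)) *\<^sub>R conv br X L n) n + conv br X Lm n))"
    proof (rule ext)
      fix n
      have a: "conv br (Rop X) (\<lambda>n. -(1/2) *\<^sub>R L n) n = (-(1/2)) *\<^sub>R conv br (Rop X) L n"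
        using fun_cong[OF e1, of n] by simp
      have b: "conv br X (Rop (\<lambda>n. -(1/2) *\<^sub>R L n)) n = (-(1/2)) *\<^sub>R conv br X L n + conv br X Lm n"
        using fun_cong[OF e2, of n] by simp
      show "(1/2) *\<^sub>R (conv br (Rop X) (\<lambda>n. -(1/2) *\<^sub>R L n) n
                 + conv br X (Rop (\<lambda>n. -(1/2) *\<^sub>R L n)) n)
       = (1/2) *\<^sub>R ((\<lambda>n. (-(1/2)) *\<^sub>R conv br (Rop X) L n + (-(1/2)) *\<^sub>R conv br X L n) n + conv br X Lm n)"
        by (simp only: a b) (simp add: algebra_simps)
    qed
    have b1: "lb (conv br (Rop X) L) M" "lb (conv br X L) M" "lb (conv br X Lm) M"
      using cM bs unfolding Lm_def by auto
    have b2: "lb (\<lambda>n. (-(1/2)) *\<^sub>R conv br (Rop X) L n + (-(1/2)) *\<^sub>R conv br X L n) M"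
      by (rule lb_comb[OF b1(1,2)])
    have b3: "lb (\<lambda>n. (\<lambda>n. (-(1/2)) *\<^sub>R conv br (Rop X) L n + (-(1/2)) *\<^sub>R conv br X L n) n + conv br X Lm n) M"
      using b2 b1 unfolding lb_def by auto
    show ?thesis unfolding r
      apply (subst P_scale_right[OF b3 bM(1)])
      apply (subst P_add_right[OF b2 b1(3) bM(1)])
      apply (subst phi_pair_lin_left[OF bf b1(1,2) bM(1), THEN trans[OF P_sym]])
      using z1 z2 i1 by (simp add: P_sym[of L])
  qed
  have c1: "P (Rop X) (\<lambda>n. -(1/2) *\<^sub>R l n) = (1/2) *\<^sub>R P (pi_minus X) l"
  proof -
    have "P (Rop X) (\<lambda>n. -(1/2) *\<^sub>R l n) = (-(1/2)) *\<^sub>R P (Rop X) l"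
      by (rule P_scale_right[OF bs(3) bs(8)])
    moreover have "P (Rop X) l = P (pi_plus X) l - P (pi_minus X) l"
      unfolding Rop_def by (rule P_diff_left[OF bs(6) bs(5) bs(3)])
    ultimately show ?thesis using P_plus_zero[OF ll] by simp
  qed
  have c2: "P X (Rop (\<lambda>n. -(1/2) *\<^sub>R l n)) = (-(1/2)) *\<^sub>R P (pi_minus X) l + P X lm"
  proof -
    have "P X (Rop (\<lambda>n. -(1/2) *\<^sub>R l n)) = P X (\<lambda>n. (-(1/2)) *\<^sub>R l n + 1 *\<^sub>R lm n)"
      unfolding Rop_scale lm_def by simp
    also have "\<dots> = (-(1/2)) *\<^sub>R P X l + 1 *\<^sub>R P X lm"
      using phi_pair_lin_left[OF bf bs(3) bs(7) bs(2), of "-(1/2)" 1] unfolding lm_def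
      by (simp add: P_sym[of X])
    moreover have "P X l = P (pi_plus X) l + P (pi_minus X) l"
    proof -
      have "X = (\<lambda>n. pi_plus X n + pi_minus X n)"
        by (rule ext) (simp add: pi_plus_def pi_minus_def)
      then have "P X l = P (\<lambda>n. pi_plus X n + pi_minus X n) l" by simp
      also have "\<dots> = P (pi_plus X) l + P (pi_minus X) l"
        by (rule P_add_left[OF bs(6) bs(5) bs(3)])
      finally show ?thesis .
    qed
    ultimately show ?thesis using P_plus_zero[OF ll] by simp
  qed
  have lhs: "P (\<lambda>n. pi_minus l n + conv br (pi_minus L) L n) X = P lm X + P (conv br Lm L) X"
    unfolding lm_def Lm_def by (rule P_add_left[OF bM(7) cM[OF bs(4) bs(1)] bM(2)])
  show ?thesis
    unfolding lhs W c1 c2 using P_sym[of X lm]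
    by (simp add: scaleR_conv_of_real algebra_simps)
qed

end


lemma smooth_D: "smooth_fun f \<Longrightarrow> \<exists>D. D 0 = f \<and> (\<forall>k t. (D k has_vector_derivative D (Suc k) t) (at t))"
  unfolding smooth_fun_def by blast

lemma smooth_const: "smooth_fun (\<lambda>t. c)"
  unfolding smooth_fun_def
  by (rule exI[of _ "\<lambda>k. if k = 0 then (\<lambda>t. c) else (\<lambda>t. 0)"]) auto

lemma smooth_linear:
  assumes h: "bounded_linear h" and f: "smooth_fun f"
  shows "smooth_fun (\<lambda>t. h (f t))"
proof -
  obtain D where D: "D 0 = f" "\<And>k t. (D k has_vector_derivative D (Suc k) t) (at t)"
    using smooth_D[OF f] by blast
  show ?thesis unfolding smooth_fun_def
    by (rule exI[of _ "\<lambda>k t. h (D k t)"])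
       (auto simp: D(1) intro!: bounded_linear.has_vector_derivative[OF h D(2)])
qed

lemma smooth_add:
  assumes f: "smooth_fun f" and g: "smooth_fun g"
  shows "smooth_fun (\<lambda>t. f t + g t)"
proof -
  obtain D where D: "D 0 = f" "\<And>k t. (D k has_vector_derivative D (Suc k) t) (at t)"
    using smooth_D[OF f] by blast
  obtain E where E: "E 0 = g" "\<And>k t. (E k has_vector_derivative E (Suc k) t) (at t)"
    using smooth_D[OF g] by blast
  show ?thesis unfolding smooth_fun_def
    by (rule exI[of _ "\<lambda>k t. D k t + E k t"])
       (auto simp: D(1) E(1) intro!: has_vector_derivative_add D(2) E(2))
qed

lemma smooth_scale: "smooth_fun f \<Longrightarrow> smooth_fun (\<lambda>t. c *\<^sub>R f t)"
  by (rule smooth_linear[OF bounded_linear_scaleR_right])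

lemma smooth_minus: "smooth_fun f \<Longrightarrow> smooth_fun (\<lambda>t. - f t)"
  using smooth_scale[of f "-1"] by simp

lemma smooth_diff: "smooth_fun f \<Longrightarrow> smooth_fun g \<Longrightarrow> smooth_fun (\<lambda>t. f t - g t)"
  using smooth_add[of f "\<lambda>t. - g t"] smooth_minus[of g] by simp

lemma smooth_sum: "finite I \<Longrightarrow> (\<And>i. i \<in> I \<Longrightarrow> smooth_fun (f i)) \<Longrightarrow> smooth_fun (\<lambda>t. \<Sum>i\<in>I. f i t)"
proof (induction I rule: finite_induct)
  case empty then show ?case by (simp add: smooth_const)
next
  case (insert x F) then show ?case by (simp add: smooth_add)
qed

lemma smooth_has_vd:
  assumes "smooth_fun f"
  shows "(f has_vector_derivative vector_derivative f (at t)) (at t)"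
proof -
  obtain D where D: "D 0 = f" "\<And>k t. (D k has_vector_derivative D (Suc k) t) (at t)"
    using smooth_D[OF assms] by blast
  show ?thesis using D(2)[of 0 t] unfolding D(1) by (metis vector_derivative_at)
qed

lemma smooth_vd:
  assumes "smooth_fun f"
  shows "smooth_fun (\<lambda>t. vector_derivative f (at t))"
proof -
  obtain D where D: "D 0 = f" "\<And>k t. (D k has_vector_derivative D (Suc k) t) (at t)"
    using smooth_D[OF assms] by blast
  have e: "(\<lambda>t. vector_derivative f (at t)) = D 1"
    using D vector_derivative_at by fastforce
  show ?thesis unfolding smooth_fun_def e
    by (rule exI[of _ "\<lambda>k. D (Suc k)"]) (auto intro: D(2))
qed

lemma smooth_cont: "smooth_fun f \<Longrightarrow> continuous_on UNIV f"
  by (rule continuous_on_vector_derivative) (use smooth_has_vd has_vector_derivative_at_within in blast)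

lemma smooth_cont_vd: "smooth_fun f \<Longrightarrow> continuous_on UNIV (\<lambda>t. vector_derivative f (at t))"
  by (rule smooth_cont[OF smooth_vd])

fun Tl :: "nat \<Rightarrow> (nat \<times> nat) list" where
  "Tl 0 = [(0,0)]"
| "Tl (Suc k) = map (\<lambda>(i,j). (Suc i, j)) (Tl k) @ map (\<lambda>(i,j). (i, Suc j)) (Tl k)"

lemma vd_sum_list:
  assumes "\<And>p. p \<in> set xs \<Longrightarrow> ((\<lambda>t. F p t) has_vector_derivative F' p) (at t)"
  shows "((\<lambda>t. sum_list (map (\<lambda>p. F p t) xs)) has_vector_derivative sum_list (map F' xs)) (at t)"
  using assms
proof (induction xs)
  case Nil then show ?case by simp
next
  case (Cons a xs) then show ?case by (simp add: has_vector_derivative_add)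
qed

lemma smooth_bilin:
  assumes b: "bounded_bilinear b" and f: "smooth_fun f" and g: "smooth_fun g"
  shows "smooth_fun (\<lambda>t. b (f t) (g t))"
proof -
  interpret bounded_bilinear b by (rule b)
  obtain D where D: "D 0 = f" "\<And>k t. (D k has_vector_derivative D (Suc k) t) (at t)"
    using smooth_D[OF f] by blast
  obtain E where E: "E 0 = g" "\<And>k t. (E k has_vector_derivative E (Suc k) t) (at t)"
    using smooth_D[OF g] by blast
  define F where "F k t = sum_list (map (\<lambda>p. b (D (fst p) t) (E (snd p) t)) (Tl k))" for k t
  have "(F k has_vector_derivative F (Suc k) t) (at t)" for k t
  proof -
    have "((\<lambda>t. sum_list (map (\<lambda>p. b (D (fst p) t) (E (snd p) t)) (Tl k))) has_vector_derivative
       sum_list (map (\<lambda>p. b (D (fst p) t) (E (Suc (snd p)) t) + b (D (Suc (fst p)) t) (E (snd p) t)) (Tl k))) (at t)"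
      by (rule vd_sum_list) (rule has_vector_derivative[OF D(2) E(2)])
    moreover have "sum_list (map (\<lambda>p. b (D (fst p) t) (E (Suc (snd p)) t) + b (D (Suc (fst p)) t) (E (snd p) t)) (Tl k))
       = F (Suc k) t"
      unfolding F_def by (simp add: sum_list_addf o_def split_def add.commute)
    ultimately show ?thesis unfolding F_def by simp
  qed
  moreover have "F 0 = (\<lambda>t. b (f t) (g t))" unfolding F_def by (auto simp: D(1) E(1))
  ultimately show ?thesis unfolding smooth_fun_def by blast
qed



lemma vd_periodic:
  assumes per: "\<And>s. f (s + c) = f s" and sm: "smooth_fun f"
  shows "vector_derivative f (at (s + c)) = vector_derivative f (at s)"
proof -
  have d1: "((\<lambda>t. t + c) has_vector_derivative 1) (at s)"
    by (auto intro!: derivative_eq_intros)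
  have "((f \<circ> (\<lambda>t. t + c)) has_vector_derivative (1 *\<^sub>R vector_derivative f (at (s + c)))) (at s)"
    by (rule vector_diff_chain_at[OF d1]) (simp add: smooth_has_vd[OF sm])
  moreover have "f \<circ> (\<lambda>t. t + c) = f" using per by (auto simp: o_def)
  ultimately have "(f has_vector_derivative vector_derivative f (at (s + c))) (at s)" by simp
  then have "vector_derivative f (at s) = vector_derivative f (at (s + c))" by (rule vector_derivative_at)
  then show ?thesis by simp
qed

locale LDL = LD br fm pr for br :: "'g::real_normed_vector \<Rightarrow> 'g \<Rightarrow> 'g" and fm pr +
  fixes A Pim :: "real \<Rightarrow> 'g"
  assumes sA: "smooth_S1 A" and sP: "smooth_S1 Pim"
begin

definition M :: "real \<Rightarrow> int \<Rightarrow> 'g" where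
  "M s k = (if 1 \<le> k then real_of_int k *\<^sub>R pr k (A s)
              + 2 *\<^sub>R pr k (vector_derivative Pim (at s) - br (A s) (Pim s)) else 0)"

abbreviation L where "L \<equiv> lax br pr A Pim"

lemma L_eq: "L s n = (1/4) *\<^sub>R M s (n - 4) + (-1/2) *\<^sub>R M s n + (1/4) *\<^sub>R M s (n + 4)"
proof -
  have "L s n = 4 *\<^sub>R (\<Sum>i\<in>{i. phi_inv i \<noteq> 0 \<and> M s (n - i) \<noteq> 0}. phi_inv i *\<^sub>R M s (n - i))"
    unfolding lax_def conv_def M_def by simp
  also have "(\<Sum>i\<in>{i. phi_inv i \<noteq> 0 \<and> M s (n - i) \<noteq> 0}. phi_inv i *\<^sub>R M s (n - i))
      = (\<Sum>i\<in>{-4,0,4}. phi_inv i *\<^sub>R M s (n - i))"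
    by (rule sum.mono_neutral_left) (auto simp: phi_inv_def split: if_splits)
  finally show ?thesis by (simp add: phi_inv_def scaleR_add_right algebra_simps)
qed

lemma M_low: "k < 1 \<Longrightarrow> M s k = 0" unfolding M_def by simp

lemma L_low: "n < -3 \<Longrightarrow> L s n = 0"
  unfolding L_eq by (simp add: M_low)

lemma pr_M: "n mod 4 = k mod 4 \<Longrightarrow> pr n (M s k) = M s k"
proof -
  assume h: "n mod 4 = k mod 4"
  then have e: "pr n = pr k" by (rule prmod)
  interpret bounded_linear "pr k" by (rule prl)
  show ?thesis unfolding e M_def by (simp add: add scaleR pridem)
qed

lemma pr_L: "pr n (L s n) = L s n"
proof -
  interpret bounded_linear "pr n" by (rule prl)
  have a: "(n - 4) mod 4 = n mod 4" "(n + 4) mod 4 = n mod 4" by presburger+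
  show ?thesis unfolding L_eq
    by (simp add: add diff scaleR pr_M a[symmetric] del: minus_mod_self2)
qed

lemma sA': "smooth_fun A" "\<And>s. A (s + 2*pi) = A s" using sA unfolding smooth_S1_def by auto
lemma sP': "smooth_fun Pim" "\<And>s. Pim (s + 2*pi) = Pim s" using sP unfolding smooth_S1_def by auto

lemma smooth_M: "smooth_fun (\<lambda>s. M s k)"
proof (cases "1 \<le> k")
  case True
  have "smooth_fun (\<lambda>s. real_of_int k *\<^sub>R pr k (A s)
              + 2 *\<^sub>R pr k (vector_derivative Pim (at s) - br (A s) (Pim s)))"
    by (intro smooth_add smooth_scale smooth_linear[OF prl] smooth_diff smooth_vd
          smooth_bilin[OF bb] sA' sP')
  then show ?thesis using True unfolding M_def by simp
qed (simp add: M_def smooth_const)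

lemma per_M: "M (s + 2*pi) k = M s k"
  unfolding M_def by (simp add: sA' sP' vd_periodic[OF sP'(2) sP'(1)])

lemma smooth_L: "smooth_S1 (\<lambda>s. L s n)"
  unfolding smooth_S1_def L_eq
  by (auto intro!: smooth_add smooth_diff smooth_scale smooth_M simp: per_M)

lemma L_in_G: "in_G pr L"
  unfolding in_G_def using L_low pr_L smooth_L by blast

end


definition nice :: "'g::real_normed_vector loopf \<Rightarrow> int \<Rightarrow> bool" where
  "nice X N \<longleftrightarrow> (\<forall>s. lb (X s) N) \<and> (\<forall>n. continuous_on UNIV (\<lambda>s. X s n))"

lemma nice_mono: "nice X N \<Longrightarrow> M \<le> N \<Longrightarrow> nice X M"
  unfolding nice_def lb_def by auto

lemma in_G_nice: assumes "in_G pr X" shows "\<exists>N. nice X N"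
proof -
  obtain N where N: "\<forall>s n. n < N \<longrightarrow> X s n = 0" and sm: "\<forall>n. smooth_S1 (\<lambda>s. X s n)"
    using assms unfolding in_G_def by blast
  have "nice X N" unfolding nice_def lb_def
    using N sm unfolding smooth_S1_def by (auto intro: smooth_cont)
  then show ?thesis ..
qed

lemma nice_scale: "nice X N \<Longrightarrow> nice (\<lambda>s n. c *\<^sub>R X s n) N"
  unfolding nice_def lb_def by (auto intro!: continuous_intros)

lemma nice_add: "nice X N \<Longrightarrow> nice Y N \<Longrightarrow> nice (\<lambda>s n. X s n + Y s n) N"
  unfolding nice_def lb_def by (auto intro!: continuous_intros)

lemma nice_pi_minus: assumes "nice X N" shows "nice (\<lambda>s. pi_minus (X s)) N"
proof -
  have c: "\<And>n. continuous_on UNIV (\<lambda>s. X s n)" "\<And>s. lb (X s) N" using assms nice_def by auto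
  show ?thesis unfolding nice_def
  proof (intro conjI allI)
    fix s show "lb (pi_minus (X s)) N" using c(2) by (rule lb_pi_minus)
  next
    fix n show "continuous_on UNIV (\<lambda>s. pi_minus (X s) n)"
      unfolding pi_minus_def using c(1)[of n] by (cases "n<0") auto
  qed
qed

lemma nice_Rop: assumes "nice X N" shows "nice (\<lambda>s. Rop (X s)) N"
proof -
  have c: "\<And>n. continuous_on UNIV (\<lambda>s. X s n)" "\<And>s. lb (X s) N" using assms nice_def by auto
  show ?thesis unfolding nice_def
  proof (intro conjI allI)
    fix s show "lb (Rop (X s)) N" using c(2) by (rule lb_Rop)
  next
    fix n show "continuous_on UNIV (\<lambda>s. Rop (X s) n)"
      unfolding Rop_def pi_minus_def pi_plus_def using c(1)[of n]
      by (cases "n<0") (auto intro: continuous_intros)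
  qed
qed

lemma integrable_cont: fixes g :: "real \<Rightarrow> 'a::banach" assumes "continuous_on UNIV g" shows "g integrable_on {0..2*pi}"
proof -
  have "continuous_on {0..2*pi} g" using continuous_on_subset[OF assms] by auto
  then show ?thesis by (rule integrable_continuous_interval)
qed

context LD begin

lemma nice_conv:
  assumes "nice X N" "nice Y N"
  shows "nice (\<lambda>s. conv br (X s) (Y s)) (N+N)"
  unfolding nice_def
proof (intro conjI allI)
  fix s show "lb (conv br (X s) (Y s)) (N + N)" by (rule lb_conv) (use assms in \<open>auto simp: nice_def\<close>)
next
  fix n
  have e: "(\<lambda>s. conv br (X s) (Y s) n) = (\<lambda>s. \<Sum>i\<in>{N..n-N}. br (X s i) (Y s (n-i)))"
  proof (rule ext)
    fix s show "conv br (X s) (Y s) n = (\<Sum>i\<in>{N..n-N}. br (X s i) (Y s (n-i)))"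
      by (rule conv_interval) (use assms in \<open>auto simp: nice_def br0\<close>)
  qed
  show "continuous_on UNIV (\<lambda>s. conv br (X s) (Y s) n)" unfolding e
    using assms unfolding nice_def
    by (intro continuous_on_sum bounded_bilinear.continuous_on[OF bb]) auto
qed

lemma cont_P:
  assumes "nice X N" "nice Y N"
  shows "continuous_on UNIV (\<lambda>s. P (X s) (Y s))"
proof -
  have e: "(\<lambda>s. P (X s) (Y s)) = (\<lambda>s. pp fm N (X s) (Y s))"
  proof (rule ext)
    fix s show "P (X s) (Y s) = pp fm N (X s) (Y s)"
      by (rule phi_pair_pp) (use assms in \<open>auto simp: nice_def fm0\<close>)
  qed
  show ?thesis unfolding e pp_def
    using assms unfolding nice_def
    by (intro continuous_on_sum continuous_on_mult continuous_on_const bounded_bilinear.continuous_on[OF bf]) auto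
qed

lemma int_P: "nice X N \<Longrightarrow> nice Y N \<Longrightarrow> (\<lambda>s. P (X s) (Y s)) integrable_on {0..2*pi}"
  by (rule integrable_cont[OF cont_P])

lemma P_lin: "lb L N \<Longrightarrow> lb Y N \<Longrightarrow> lb Z N \<Longrightarrow> P (\<lambda>n. L n + t *\<^sub>R Y n) Z = P L Z + t *\<^sub>R P Y Z"
  using phi_pair_lin_left[OF bf, of L N Y Z 1 t] by simp

lemma Gpair_lin:
  assumes "nice L N" "nice Y N" "nice X N"
  shows "Gpair fm (\<lambda>s n. L s n + t *\<^sub>R Y s n) X = Gpair fm L X + t *\<^sub>R Gpair fm Y X"
proof -
  have "Gpair fm (\<lambda>s n. L s n + t *\<^sub>R Y s n) X = integral {0..2*pi} (\<lambda>s. P (L s) (X s) + t *\<^sub>R P (Y s) (X s))"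
  proof -
    have "\<And>s. P (\<lambda>n. L s n + t *\<^sub>R Y s n) (X s) = P (L s) (X s) + t *\<^sub>R P (Y s) (X s)"
      using assms by (intro P_lin) (auto simp: nice_def)
    then show ?thesis unfolding Gpair_def by simp
  qed
  also have "\<dots> = Gpair fm L X + t *\<^sub>R Gpair fm Y X"
    unfolding Gpair_def
    by (subst integral_add) (auto intro!: integrable_cmul int_P assms)
  finally show ?thesis .
qed

lemma Gpair_scale_right:
  assumes "nice L N" "nice Y N"
  shows "Gpair fm Y (\<lambda>s n. c *\<^sub>R L s n) = c *\<^sub>R Gpair fm Y L"
proof -
  have "Gpair fm Y (\<lambda>s n. c *\<^sub>R L s n) = integral {0..2*pi} (\<lambda>s. c *\<^sub>R P (Y s) (L s))"
  proof -
    have "\<And>s. P (Y s) (\<lambda>n. c *\<^sub>R L s n) = c *\<^sub>R P (Y s) (L s)"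
      using assms by (intro P_scale_right) (auto simp: nice_def)
    then show ?thesis unfolding Gpair_def by simp
  qed
  then show ?thesis unfolding Gpair_def by simp
qed

lemma Gpair_sym: "Gpair fm X Y = Gpair fm Y X"
  unfolding Gpair_def by (simp add: P_sym)

lemma Gpair_quad:
  assumes "nice L N" "nice Y N"
  shows "Gpair fm (\<lambda>s n. L s n + t *\<^sub>R Y s n) (\<lambda>s n. L s n + t *\<^sub>R Y s n)
     = Gpair fm L L + (2*t) *\<^sub>R Gpair fm L Y + (t*t) *\<^sub>R Gpair fm Y Y"
proof -
  have n2: "nice (\<lambda>s n. L s n + t *\<^sub>R Y s n) N" using assms by (intro nice_add nice_scale)
  have "Gpair fm (\<lambda>s n. L s n + t *\<^sub>R Y s n) (\<lambda>s n. L s n + t *\<^sub>R Y s n)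
     = Gpair fm L (\<lambda>s n. L s n + t *\<^sub>R Y s n) + t *\<^sub>R Gpair fm Y (\<lambda>s n. L s n + t *\<^sub>R Y s n)"
    by (rule Gpair_lin[OF assms n2])
  also have "Gpair fm L (\<lambda>s n. L s n + t *\<^sub>R Y s n) = Gpair fm L L + t *\<^sub>R Gpair fm L Y"
    using Gpair_lin[OF assms assms(1), of t] Gpair_sym[of "(\<lambda>s n. L s n + t *\<^sub>R Y s n)" L]
      Gpair_sym[of Y L] by simp
  also have "Gpair fm Y (\<lambda>s n. L s n + t *\<^sub>R Y s n) = Gpair fm L Y + t *\<^sub>R Gpair fm Y Y"
    using Gpair_lin[OF assms assms(2), of t] Gpair_sym[of "(\<lambda>s n. L s n + t *\<^sub>R Y s n)" Y]
      by simp
  finally show ?thesis by (simp add: scaleR_add_right scaleR_conv_of_real algebra_simps)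
qed

end


lemma per_ext:
  fixes g :: "real \<Rightarrow> 'a::zero"
  assumes per: "\<And>s. g (s + 2*pi) = g s" and z: "\<And>s. s \<in> {0..2*pi} \<Longrightarrow> g s = 0"
  shows "g s = 0"
proof -
  have pn: "g (x + real n * (2*pi)) = g x" for x n
  proof (induction n)
    case (Suc n)
    have e: "x + real (Suc n) * (2*pi) = (x + real n * (2*pi)) + 2*pi" by (simp add: algebra_simps)
    have "g (x + real (Suc n) * (2*pi)) = g ((x + real n * (2*pi)) + 2*pi)" by (simp only: e)
    also have "\<dots> = g (x + real n * (2*pi))" by (rule per)
    also have "\<dots> = g x" by (rule Suc.IH)
    finally show ?case .
  qed simp
  have pi: "g (x + real_of_int k * (2*pi)) = g x" for x k
  proof (cases "k \<ge> 0")
    case True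
    obtain n where kn: "k = int n" using nonneg_int_cases[OF True] by blast
    have e: "real_of_int k = real n" unfolding kn by (rule of_int_of_nat_eq)
    show ?thesis unfolding e by (rule pn)
  next
    case False
    then have "0 \<le> -k" by simp
    obtain n where kn: "-k = int n" using nonneg_int_cases[OF \<open>0 \<le> -k\<close>] by blast
    have e: "real_of_int k = - real n"
    proof -
      have "real_of_int (-k) = real n" unfolding kn by (rule of_int_of_nat_eq)
      then show ?thesis by (simp only: of_int_minus)
    qed
    have e2: "x + real_of_int k * (2*pi) = x - real n * (2*pi)" unfolding e by (simp only: mult_minus_left diff_conv_add_uminus)
    have "g (x + real_of_int k * (2*pi)) = g (x - real n * (2*pi))" by (simp only: e2)
    also have "\<dots> = g ((x - real n * (2*pi)) + real n * (2*pi))" by (rule pn[symmetric])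
    also have "(x - real n * (2*pi)) + real n * (2*pi) = x" by simp
    finally show ?thesis .
  qed
  define k where "k = \<lfloor>s / (2*pi)\<rfloor>"
  have pp: "0 < 2*pi" using pi_gt_zero by simp
  have f1: "real_of_int k \<le> s / (2*pi)" "s / (2*pi) < real_of_int k + 1"
    unfolding k_def by (rule of_int_floor_le, rule real_of_int_floor_add_one_gt)
  have f2: "real_of_int k * (2*pi) \<le> s" "s < (real_of_int k + 1) * (2*pi)"
    using f1 pos_le_divide_eq[OF pp] pos_divide_less_eq[OF pp] by auto
  define s' where "s' = s - real_of_int k * (2*pi)"
  have "0 \<le> s'" "s' \<le> 2*pi" using f2 unfolding s'_def by (simp_all add: distrib_right)
  then have "s' \<in> {0..2*pi}" by simp
  moreover have "g s = g s'"
  proof -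
    have "s = s' + real_of_int k * (2*pi)" unfolding s'_def by simp
    then show ?thesis using pi[of s' k] by simp
  qed
  ultimately show ?thesis using z by simp
qed

context LD begin

lemma in_G_D:
  assumes "in_G pr E"
  shows "\<exists>N. \<forall>s. lb (E s) N" "\<And>s n. pr n (E s n) = E s n" "\<And>n. smooth_fun (\<lambda>s. E s n)"
    "\<And>s n. E (s + 2*pi) n = E s n"
  using assms unfolding in_G_def smooth_S1_def lb_def by auto

lemma sq_zero:
  fixes h :: "real \<Rightarrow> real"
  assumes c: "continuous_on UNIV h" and per: "\<And>s. h (s + 2*pi) = h s"
    and i: "integral {0..2*pi} (\<lambda>s. h s * h s) = 0"
  shows "h s = 0"
proof (rule per_ext[of h, OF per])
  fix s assume s: "s \<in> {0..2*pi}"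
  have "continuous_on {0..2*pi} (\<lambda>s. h s * h s)"
    by (intro continuous_intros continuous_on_subset[OF c]) auto
  then have "\<forall>x\<in>{0..2*pi}. h x * h x = 0" using i
    by (subst integral_eq_0_iff[symmetric]) auto
  then show "h s = 0" using s by simp
qed

lemma nondeg_core:
  assumes EG: "in_G pr E" and orth: "\<And>Y. in_G pr Y \<Longrightarrow> Gpair fm Y E = 0"
    and lbE: "\<And>s. lb (E s) N" and N: "N \<le> -2" and ym: "pr m y = y"
  shows "(\<Sum>i\<in>{1..-2*min N m}. of_real (phi i) * fm y (E s (-i-m))) = 0"
proof -
  define N' where "N' = min N m"
  define f where "f s = (\<Sum>i\<in>{1..-2*N'}. of_real (phi i) * fm y (E s (-i-m)))" for s
  note ED = in_G_D[OF EG]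
  interpret fb: bounded_bilinear fm by (rule bf)
  have lbE': "lb (E s) N'" for s by (rule lb_mono[OF lbE]) (simp add: N'_def)
  have key: "integral {0..2*pi} (\<lambda>s. of_real (c s) * f s) = 0"
    if sc: "smooth_fun c" and pc: "\<And>s. c (s + 2*pi) = c s" for c :: "real \<Rightarrow> real"
  proof -
    define Y where "Y s n = (if n = m then c s *\<^sub>R y else 0)" for s n
    have YG: "in_G pr Y" unfolding in_G_def
    proof (intro conjI allI)
      show "\<exists>N. \<forall>s n. n < N \<longrightarrow> Y s n = 0" by (rule exI[of _ m]) (auto simp: Y_def)
    next
      fix s n
      interpret bounded_linear "pr n" by (rule prl)
      show "pr n (Y s n) = Y s n"
      proof (cases "n = m")
        case True
        have "pr n y = y" using ym True by simp
        then have "pr n (c s *\<^sub>R y) = c s *\<^sub>R y" by (simp add: scaleR)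
        then show ?thesis using True by (simp add: Y_def)
      qed (simp add: Y_def zero)
    next
      fix n
      show "smooth_S1 (\<lambda>s. Y s n)" unfolding smooth_S1_def Y_def
        by (cases "n = m") (auto simp: smooth_const pc intro!: smooth_linear[OF bounded_linear_scaleR_left sc])
    qed
    have lY: "lb (Y s) N'" for s unfolding lb_def Y_def N'_def by auto
    have pw: "P (Y s) (E s) = of_real (c s) * f s" for s
    proof -
      have "P (Y s) (E s) = pp fm N' (Y s) (E s)"
        by (rule phi_pair_pp[OF lY lbE']) (auto simp: fm0)
      also have "\<dots> = (\<Sum>i\<in>{1..-2*N'}. of_real (phi i) * (of_real (c s) * fm y (E s (-i-m))))"
        unfolding pp_def
      proof (rule sum.cong[OF refl])
        fix i
        have inner: "(\<Sum>j\<in>{N'..-i-N'}. fm (Y s j) (E s (-i-j))) = of_real (c s) * fm y (E s (-i-m))"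
        proof -
          have "(\<Sum>j\<in>{N'..-i-N'}. fm (Y s j) (E s (-i-j)))
              = (\<Sum>j\<in>{N'..-i-N'}. if j = m then of_real (c s) * fm y (E s (-i-j)) else 0)"
            by (rule sum.cong) (auto simp: Y_def fb.scaleR_left scaleR_conv_of_real fm0)
          also have "\<dots> = (if m \<in> {N'..-i-N'} then of_real (c s) * fm y (E s (-i-m)) else 0)"
            by simp
          also have "\<dots> = of_real (c s) * fm y (E s (-i-m))"
          proof (cases "m \<in> {N'..-i-N'}")
            case False
            then have "-i-m < N'" unfolding N'_def by auto
            then have "E s (-i-m) = 0" using lbE' unfolding lb_def by auto
            then show ?thesis using False by (simp add: fm0)
          qed simp
          finally show ?thesis .
        qed
        show "of_real (phi i) * (\<Sum>j\<in>{N'..-i-N'}. fm (Y s j) (E s (-i-j))) =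
              of_real (phi i) * (of_real (c s) * fm y (E s (-i-m)))" by (simp only: inner)
      qed
      also have "\<dots> = of_real (c s) * f s" unfolding f_def sum_distrib_left
        by (rule sum.cong) (auto simp: ac_simps)
      finally show ?thesis .
    qed
    have "0 = Gpair fm Y E" using orth[OF YG] by simp
    also have "\<dots> = integral {0..2*pi} (\<lambda>s. of_real (c s) * f s)" unfolding Gpair_def pw ..
    finally show ?thesis by simp
  qed
  have lin: "bounded_linear (\<lambda>z. fm y z)" by (rule fb.bounded_linear_right)
  have fcont: "continuous_on UNIV f" unfolding f_def
    using ED(3) by (intro continuous_on_sum continuous_on_mult continuous_on_const
        bounded_linear.continuous_on[OF lin] smooth_cont) auto
  have fper: "f (s + 2*pi) = f s" for s unfolding f_def using ED(4) by simp
  have reeq: "(\<lambda>s. Re (f s)) = (\<lambda>s. \<Sum>i\<in>{1..-2*N'}. phi i *\<^sub>R Re (fm y (E s (-i-m))))"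
    unfolding f_def by (auto simp: fun_eq_iff)
  have imeq: "(\<lambda>s. Im (f s)) = (\<lambda>s. \<Sum>i\<in>{1..-2*N'}. phi i *\<^sub>R Im (fm y (E s (-i-m))))"
    unfolding f_def by (auto simp: fun_eq_iff)
  have lRe: "bounded_linear (\<lambda>z. Re (fm y z))"
    using bounded_linear_compose[OF bounded_linear_Re lin] by (simp add: o_def)
  have lIm: "bounded_linear (\<lambda>z. Im (fm y z))"
    using bounded_linear_compose[OF bounded_linear_Im lin] by (simp add: o_def)
  have sRe: "smooth_fun (\<lambda>s. Re (f s))" unfolding reeq
    by (intro smooth_sum smooth_scale smooth_linear[OF lRe] ED(3)) auto
  have sIm: "smooth_fun (\<lambda>s. Im (f s))" unfolding imeq
    by (intro smooth_sum smooth_scale smooth_linear[OF lIm] ED(3)) auto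
  have intg: "(\<lambda>s. of_real (c s) * f s) integrable_on {0..2*pi}" if "continuous_on UNIV c" for c
    by (rule integrable_cont) (intro continuous_intros that fcont)
  have re0: "Re (f s) = 0" for s
  proof (rule sq_zero[of "\<lambda>s. Re (f s)"])
    show "continuous_on UNIV (\<lambda>s. Re (f s))" by (intro continuous_intros fcont)
    show "Re (f (s + 2*pi)) = Re (f s)" for s using fper by simp
    have "integral {0..2*pi} (Re \<circ> (\<lambda>s. of_real (Re (f s)) * f s)) = Re (integral {0..2*pi} (\<lambda>s. of_real (Re (f s)) * f s))"
      by (rule integral_linear[OF intg bounded_linear_Re]) (intro continuous_intros fcont)
    also have "\<dots> = 0" using key[OF sRe] fper by simp
    finally show "integral {0..2*pi} (\<lambda>s. Re (f s) * Re (f s)) = 0" by (simp add: o_def)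
  qed
  have im0: "Im (f s) = 0" for s
  proof (rule sq_zero[of "\<lambda>s. Im (f s)"])
    show "continuous_on UNIV (\<lambda>s. Im (f s))" by (intro continuous_intros fcont)
    show "Im (f (s + 2*pi)) = Im (f s)" for s using fper by simp
    have "integral {0..2*pi} (Im \<circ> (\<lambda>s. of_real (Im (f s)) * f s)) = Im (integral {0..2*pi} (\<lambda>s. of_real (Im (f s)) * f s))"
      by (rule integral_linear[OF intg bounded_linear_Im]) (intro continuous_intros fcont)
    also have "\<dots> = 0" using key[OF sIm] fper by simp
    finally show "integral {0..2*pi} (\<lambda>s. Im (f s) * Im (f s)) = 0" by (simp add: o_def)
  qed
  have "f s = 0" using re0[of s] im0[of s] by (simp add: complex_eq_iff)
  then show ?thesis unfolding f_def N'_def .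
qed

end


context LD begin

lemma grade_zero:
  assumes h: "\<And>y. pr (-4-k) y = y \<Longrightarrow> fm y x = 0" and xk: "pr k x = x"
  shows "x = 0"
proof (rule nondeg)
  fix z
  interpret fb: bounded_bilinear fm by (rule bf)
  have each: "fm x (pr j z) = 0" for j
  proof (cases "(k + j) mod 4 = 0")
    case False
    then show ?thesis using fgr[OF False, of x z] xk by simp
  next
    case True
    then have "j mod 4 = (-4-k) mod 4" by presburger
    then have e: "pr j = pr (-4-k)" by (rule prmod)
    have "pr (-4-k) (pr j z) = pr j z" unfolding e by (rule pridem)
    then have "fm (pr j z) x = 0" by (rule h)
    then show ?thesis by (simp add: fsym)
  qed
  have "fm x z = fm x (pr 0 z + pr 1 z + pr 2 z + pr 3 z)" by (simp add: prsum)
  also have "\<dots> = 0" by (simp add: fb.add_right each)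
  finally show "fm x z = 0" .
qed

lemma nondeg_G:
  assumes EG: "in_G pr E" and orth: "\<And>Y. in_G pr Y \<Longrightarrow> Gpair fm Y E = 0"
  shows "E s k = 0"
proof -
  note ED = in_G_D[OF EG]
  obtain N0 where N0: "\<And>s. lb (E s) N0" using ED(1) by blast
  define N where "N = min N0 (-2)"
  have lbE: "lb (E s) N" for s by (rule lb_mono[OF N0]) (simp add: N_def)
  have N: "N \<le> -2" unfolding N_def by simp
  have ind: "\<forall>k. k < N + int d \<longrightarrow> E s k = 0" for d
  proof (induction d)
    case 0 then show ?case using lbE unfolding lb_def by simp
  next
    case (Suc d)
    show ?case
    proof (intro allI impI)
      fix k assume k: "k < N + int (Suc d)"
      show "E s k = 0"
      proof (cases "k < N + int d")
        case True then show ?thesis using Suc.IH by blast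
      next
        case False
        then have kd: "k = N + int d" using k by simp
        have IH: "\<And>j. j < k \<Longrightarrow> E s j = 0" using Suc.IH kd by blast
        have "x = 0" if "x = E s k" for x
        proof (rule grade_zero)
          fix y assume ym: "pr (-4-k) y = y"
          have S: "(\<Sum>i\<in>{1..-2*min N (-4-k)}. of_real (phi i) * fm y (E s (-i-(-4-k)))) = 0"
            by (rule nondeg_core[OF EG orth lbE N ym])
          define I where "I = {1..-2*min N (-4-k)}"
          have "min N (-4-k) \<le> -2" using N by simp
          then have I4: "4 \<in> I" unfolding I_def by simp
          have "(\<Sum>i\<in>I. of_real (phi i) * fm y (E s (-i-(-4-k))))
              = of_real (phi 4) * fm y (E s (-4-(-4-k))) + (\<Sum>i\<in>I-{4}. of_real (phi i) * fm y (E s (-i-(-4-k))))"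
            by (rule sum.remove[OF _ I4]) (simp add: I_def)
          also have "(\<Sum>i\<in>I-{4}. of_real (phi i) * fm y (E s (-i-(-4-k)))) = 0"
          proof (rule sum.neutral, rule ballI)
            fix i assume i: "i \<in> I - {4}"
            show "of_real (phi i) * fm y (E s (-i-(-4-k))) = 0"
            proof (cases "phi i = 0")
              case False
              then have "4 dvd i" "0 < i" unfolding phi_def by (auto split: if_splits)
              with i have "8 \<le> i" by (auto simp: dvd_def)
              then have "E s (-i-(-4-k)) = 0" by (intro IH) simp
              then show ?thesis by (simp add: fm0)
            qed simp
          qed
          finally have "of_real (phi 4) * fm y (E s k) = 0" using S unfolding I_def by simp
          moreover have "phi 4 = 16" unfolding phi_def by simp
          ultimately show "fm y x = 0" using that by simp
        next
          show "pr k x = x" using ED(2) that by simp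
        qed
        then show ?thesis by simp
      qed
    qed
  qed
  show ?thesis using ind[of "nat (k - N + 1)"] by simp
qed

lemma pr0: "pr n 0 = 0"
proof -
  interpret bounded_linear "pr n" by (rule prl)
  show ?thesis by (rule zero)
qed

lemma pr_diff: "pr n (a - b) = pr n a - pr n b"
proof -
  interpret bounded_linear "pr n" by (rule prl)
  show ?thesis by (rule diff)
qed

lemma pr_scale: "pr n (c *\<^sub>R a) = c *\<^sub>R pr n a"
proof -
  interpret bounded_linear "pr n" by (rule prl)
  show ?thesis by (rule scaleR)
qed

lemma in_G_zero: "in_G pr (\<lambda>s n. 0)"
  unfolding in_G_def smooth_S1_def
  using pr0 smooth_const by auto

lemma Gpair_zero: "Gpair fm (\<lambda>s n. 0) Y = 0"
  unfolding Gpair_def phi_pair_def conv_def by simp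

lemma in_G_diff:
  assumes "in_G pr E1" "in_G pr E2"
  shows "in_G pr (\<lambda>s n. E1 s n - E2 s n)"
proof -
  note D1 = in_G_D[OF assms(1)] and D2 = in_G_D[OF assms(2)]
  obtain N1 N2 where N: "\<And>s. lb (E1 s) N1" "\<And>s. lb (E2 s) N2" using D1(1) D2(1) by blast
  show ?thesis unfolding in_G_def smooth_S1_def
  proof (intro conjI allI)
    show "\<exists>N. \<forall>s n. n < N \<longrightarrow> E1 s n - E2 s n = 0"
      by (rule exI[of _ "min N1 N2"]) (use N in \<open>auto simp: lb_def\<close>)
  next
    fix s n
    show "pr n (E1 s n - E2 s n) = E1 s n - E2 s n"
      using D1(2) D2(2) by (simp add: pr_diff)
  next
    fix n
    show "smooth_fun (\<lambda>s. E1 s n - E2 s n)" by (intro smooth_diff D1(3) D2(3))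
  next
    fix n s
    show "E1 (s + 2 * pi) n - E2 (s + 2 * pi) n = E1 s n - E2 s n" using D1(4) D2(4) by simp
  qed
qed

lemma common_nice:
  assumes "in_G pr X" "in_G pr Y" "in_G pr Z"
  shows "\<exists>N. nice X N \<and> nice Y N \<and> nice Z N"
proof -
  obtain N1 N2 N3 where "nice X N1" "nice Y N2" "nice Z N3" using in_G_nice assms by metis
  then have "nice X (min N1 (min N2 N3))" "nice Y (min N1 (min N2 N3))" "nice Z (min N1 (min N2 N3))"
    by (auto elim!: nice_mono)
  then show ?thesis by blast
qed

lemma hgrad_unique:
  assumes D1: "is_hgrad pr fm f Lh D1" and D2: "is_hgrad pr fm f Lh D2"
  shows "D1 = D2"
proof -
  have h: "hpair fm Xh D1 = hpair fm Xh D2" if "in_Ghat pr Xh" for Xh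
    using D1 D2 that unfolding is_hgrad_def by (metis vector_derivative_unique_at)
  have G1: "in_G pr (fst D1)" and G2: "in_G pr (fst D2)"
    using D1 D2 unfolding is_hgrad_def in_Ghat_def by auto
  have "snd D1 = snd D2"
    using h[of "((\<lambda>s n. 0), 1)"] in_G_zero by (simp add: in_Ghat_def hpair_def Gpair_zero)
  moreover have "fst D1 = fst D2"
  proof -
    have "(\<lambda>s n. fst D1 s n - fst D2 s n) s n = 0" for s n
    proof (rule nondeg_G[OF in_G_diff[OF G1 G2]])
      fix Y assume YG: "in_G pr Y"
      obtain N where N: "nice Y N" "nice (fst D1) N" "nice (fst D2) N"
        using common_nice[OF YG G1 G2] by blast
      have e: "Gpair fm Y (fst D1) = Gpair fm Y (fst D2)"
        using h[of "(Y, 0)"] YG by (simp add: in_Ghat_def hpair_def)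
      have "Gpair fm Y (\<lambda>s n. fst D1 s n - fst D2 s n)
          = integral {0..2*pi} (\<lambda>s. P (Y s) (fst D1 s) - P (Y s) (fst D2 s))"
      proof -
        have "\<And>s. P (Y s) (\<lambda>n. fst D1 s n - fst D2 s n) = P (Y s) (fst D1 s) - P (Y s) (fst D2 s)"
          using N by (intro P_diff_right) (auto simp: nice_def)
        then show ?thesis unfolding Gpair_def by simp
      qed
      also have "\<dots> = 0"
        using e unfolding Gpair_def
        by (subst integral_diff) (auto intro!: int_P N)
      finally show "Gpair fm Y (\<lambda>s n. fst D1 s n - fst D2 s n) = 0" .
    qed
    then show ?thesis by (auto simp: fun_eq_iff)
  qed
  ultimately show ?thesis by (simp add: prod_eq_iff)
qed

lemma hgrad_eq: "is_hgrad pr fm f Lh D \<Longrightarrow> hgrad pr fm f Lh = D"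
  unfolding hgrad_def using hgrad_unique by blast

end


lemma vd_lin: "((\<lambda>t. c0 + t *\<^sub>R c1) has_vector_derivative c1) (at x)"
proof -
  have "((\<lambda>t. t *\<^sub>R c1) has_vector_derivative c1) (at x)"
    unfolding has_vector_derivative_def
    by (rule bounded_linear_imp_has_derivative[OF bounded_linear_scaleR_left])
  then have "((\<lambda>t. t *\<^sub>R c1 + c0) has_vector_derivative c1) (at x)"
    by (subst has_vector_derivative_add_const)
  then show ?thesis by (simp add: add.commute)
qed

context LD begin

lemma in_G_scale:
  assumes "in_G pr E" shows "in_G pr (\<lambda>s n. c *\<^sub>R E s n)"
proof -
  note D = in_G_D[OF assms]
  obtain N where N: "\<And>s. lb (E s) N" using D(1) by blast
  show ?thesis unfolding in_G_def smooth_S1_def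
  proof (intro conjI allI)
    show "\<exists>N. \<forall>s n. n < N \<longrightarrow> c *\<^sub>R E s n = 0"
      by (rule exI[of _ N]) (use N in \<open>auto simp: lb_def\<close>)
  next
    fix s n show "pr n (c *\<^sub>R E s n) = c *\<^sub>R E s n" using D(2) by (simp add: pr_scale)
  next
    fix n show "smooth_fun (\<lambda>s. c *\<^sub>R E s n)" by (intro smooth_scale D(3))
  next
    fix n s show "c *\<^sub>R E (s + 2 * pi) n = c *\<^sub>R E s n" using D(4) by simp
  qed
qed

lemma grad_lin:
  assumes XG: "in_G pr X" and LG: "in_G pr L"
  shows "is_hgrad pr fm (\<lambda>Mh. hpair fm Mh (X, 0)) (L, 1) (X, 0)"
  unfolding is_hgrad_def
proof (intro conjI allI impI)
  show "in_Ghat pr (X, 0)" using XG by (simp add: in_Ghat_def)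
next
  fix Xh :: "'g hat" assume "in_Ghat pr Xh"
  then have YG: "in_G pr (fst Xh)" by (simp add: in_Ghat_def)
  obtain N where N: "nice L N" "nice (fst Xh) N" "nice X N" using common_nice[OF LG YG XG] by blast
  have e: "(\<lambda>t. hpair fm (hadd (L, 1) (hscale t Xh)) (X, 0))
      = (\<lambda>t. Gpair fm L X + t *\<^sub>R Gpair fm (fst Xh) X)"
  proof
    fix t
    have "hpair fm (hadd (L, 1) (hscale t Xh)) (X, 0) = Gpair fm (\<lambda>s n. L s n + t *\<^sub>R fst Xh s n) X"
      by (simp add: hadd_def hscale_def hpair_def)
    also have "\<dots> = Gpair fm L X + t *\<^sub>R Gpair fm (fst Xh) X" by (rule Gpair_lin[OF N])
    finally show "hpair fm (hadd (L, 1) (hscale t Xh)) (X, 0) = Gpair fm L X + t *\<^sub>R Gpair fm (fst Xh) X" .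
  qed
  have v: "hpair fm Xh (X, 0) = Gpair fm (fst Xh) X" by (simp add: hpair_def)
  show "((\<lambda>t. hpair fm (hadd (L, 1) (hscale t Xh)) (X, 0)) has_vector_derivative hpair fm Xh (X, 0)) (at 0)"
    unfolding e v by (rule vd_lin)
qed

lemma grad_P:
  assumes LG: "in_G pr L"
  shows "is_hgrad pr fm (P_minus fm) (L, 1) ((\<lambda>s n. -(1/2) *\<^sub>R L s n), -1/2)"
  unfolding is_hgrad_def
proof (intro conjI allI impI)
  show "in_Ghat pr ((\<lambda>s n. -(1/2) *\<^sub>R L s n), -1/2)"
    using in_G_scale[OF LG, of "-(1/2)"] by (simp add: in_Ghat_def)
next
  fix Xh :: "'g hat" assume "in_Ghat pr Xh"
  then have YG: "in_G pr (fst Xh)" by (simp add: in_Ghat_def)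
  obtain N where N: "nice L N" "nice (fst Xh) N" using common_nice[OF LG YG YG] by blast
  define a where "a = Gpair fm L L"
  define c where "c = Gpair fm L (fst Xh)"
  define d where "d = Gpair fm (fst Xh) (fst Xh)"
  define b where "b = snd Xh"
  define Gc where "Gc z = -(1/4) * (a + 2*z*c + z*z*d + (1 + z*b)*(1 + z*b))" for z :: complex
  have e: "(\<lambda>t. P_minus fm (hadd (L, 1) (hscale t Xh))) = (\<lambda>t. Gc (of_real t))"
  proof
    fix t
    have "P_minus fm (hadd (L, 1) (hscale t Xh))
        = -(1/4) * (Gpair fm (\<lambda>s n. L s n + t *\<^sub>R fst Xh s n) (\<lambda>s n. L s n + t *\<^sub>R fst Xh s n)
             + (1 + of_real t * b) * (1 + of_real t * b))"
      by (simp add: P_minus_def hadd_def hscale_def hpair_def b_def)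
    also have "\<dots> = Gc (of_real t)"
      unfolding Gpair_quad[OF N] Gc_def a_def c_def d_def by (simp add: scaleR_conv_of_real algebra_simps)
    finally show "P_minus fm (hadd (L, 1) (hscale t Xh)) = Gc (of_real t)" .
  qed
  have dG: "(Gc has_field_derivative (-(1/4) * (2*c + 2*b))) (at (of_real 0))"
    unfolding Gc_def by (auto intro!: derivative_eq_intros simp: algebra_simps)
  have v: "hpair fm Xh ((\<lambda>s n. -(1/2) *\<^sub>R L s n), -1/2) = -(1/4) * (2*c + 2*b)"
  proof -
    have "hpair fm Xh ((\<lambda>s n. -(1/2) *\<^sub>R L s n), -1/2) = Gpair fm (fst Xh) (\<lambda>s n. (-(1/2)) *\<^sub>R L s n) + b * (-1/2)"
      by (simp add: hpair_def b_def)
    also have "\<dots> = (-(1/2)) *\<^sub>R Gpair fm (fst Xh) L + b * (-1/2)"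
      by (simp only: Gpair_scale_right[OF N(1,2)])
    also have "Gpair fm (fst Xh) L = c" unfolding c_def by (rule Gpair_sym)
    finally show ?thesis by (simp add: scaleR_conv_of_real algebra_simps)
  qed
  show "((\<lambda>t. P_minus fm (hadd (L, 1) (hscale t Xh))) has_vector_derivative
          hpair fm Xh ((\<lambda>s n. -(1/2) *\<^sub>R L s n), -1/2)) (at 0)"
    unfolding e v using has_vector_derivative_real_field[OF dG, of UNIV] by simp
qed

end


context LDL begin

definition l :: "real \<Rightarrow> int \<Rightarrow> 'g" where "l s n = vector_derivative (\<lambda>t. L t n) (at s)"

lemma hasD: "((\<lambda>t. L t n) has_vector_derivative l s n) (at s)"
  unfolding l_def using smooth_L[of n] unfolding smooth_S1_def by (blast intro: smooth_has_vd)

lemma ds1: "dsig (\<lambda>t. pi_minus (L t)) s n = pi_minus (l s) n"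
  unfolding dsig_def pi_minus_def l_def by (cases "n < 0") simp_all

lemma ds2: "dsig (\<lambda>s n. -(1/2) *\<^sub>R L s n) = (\<lambda>s n. -(1/2) *\<^sub>R l s n)"
proof (intro ext)
  fix s n
  have "((\<lambda>t. -(1/2) *\<^sub>R L t n) has_vector_derivative -(1/2) *\<^sub>R l s n) (at s)"
    by (intro has_vector_derivative_minus bounded_linear.has_vector_derivative[OF bounded_linear_scaleR_right] hasD)
  then show "dsig (\<lambda>s n. -(1/2) *\<^sub>R L s n) s n = -(1/2) *\<^sub>R l s n"
    unfolding dsig_def by (rule vector_derivative_at)
qed

lemma ds3: "dsig (\<lambda>s. Rop (\<lambda>n. -(1/2) *\<^sub>R L s n)) = (\<lambda>s. Rop (\<lambda>n. -(1/2) *\<^sub>R l s n))"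
proof (intro ext)
  fix s n
  have d: "((\<lambda>t. -(1/2) *\<^sub>R L t n) has_vector_derivative -(1/2) *\<^sub>R l s n) (at s)"
    by (intro has_vector_derivative_minus bounded_linear.has_vector_derivative[OF bounded_linear_scaleR_right] hasD)
  show "dsig (\<lambda>s. Rop (\<lambda>n. -(1/2) *\<^sub>R L s n)) s n = Rop (\<lambda>n. -(1/2) *\<^sub>R l s n) n"
  proof (cases "n < 0")
    case True
    have "((\<lambda>t. - (-(1/2) *\<^sub>R L t n)) has_vector_derivative - (-(1/2) *\<^sub>R l s n)) (at s)"
      by (rule has_vector_derivative_minus[OF d])
    then show ?thesis using True unfolding dsig_def Rop_def pi_plus_def pi_minus_def
      by (simp add: vector_derivative_at)
  next
    case False
    then show ?thesis using d unfolding dsig_def Rop_def pi_plus_def pi_minus_def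
      by (simp add: vector_derivative_at)
  qed
qed

lemma l_low: "n < -3 \<Longrightarrow> l s n = 0"
proof -
  assume "n < -3"
  then have "(\<lambda>t. L t n) = (\<lambda>t. 0)" using L_low by auto
  then show ?thesis unfolding l_def by simp
qed

lemma l_nice: "nice l (-3)"
  unfolding nice_def lb_def
proof (intro conjI allI impI)
  fix s n :: int show "n < -3 \<Longrightarrow> l s n = 0" for s using l_low by simp
next
  fix n show "continuous_on UNIV (\<lambda>s. l s n)"
    unfolding l_def using smooth_L[of n] unfolding smooth_S1_def by (blast intro: smooth_cont_vd)
qed


lemma main:
  assumes XG: "in_G pr X"
  shows "Gpair fm (\<lambda>s n. dsig (\<lambda>t. pi_minus (L t)) s n + Gbr br (\<lambda>t. pi_minus (L t)) L s n) X
     = Rpoisson br fm pr (\<lambda>Mh. hpair fm Mh (X, 0)) (P_minus fm) (L, 1)"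
proof -
  have LG: "in_G pr L" by (rule L_in_G)
  have g1: "hgrad pr fm (\<lambda>Mh. hpair fm Mh (X, 0)) (L, 1) = (X, 0)"
    by (rule hgrad_eq[OF grad_lin[OF XG LG]])
  have g2: "hgrad pr fm (P_minus fm) (L, 1) = ((\<lambda>s n. -(1/2) *\<^sub>R L s n), -1/2)"
    by (rule hgrad_eq[OF grad_P[OF LG]])
  obtain N0 where N0: "nice L N0" "nice X N0" using common_nice[OF LG XG XG] by blast
  define N where "N = min N0 (-3)"
  have N3: "N \<le> -3" unfolding N_def by simp
  have nL: "nice L N" and nX: "nice X N" and nl: "nice l N"
    using N0 l_nice by (auto simp: N_def elim!: nice_mono)
  define M where "M = N + N"
  have MN: "M \<le> N" using N3 unfolding M_def by simp
  have nLM: "nice L M" and nXM: "nice X M" and nlM: "nice l M"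
    using nL nX nl MN by (auto elim!: nice_mono)
  define A0 where "A0 s = (\<lambda>n. pi_minus (l s) n + conv br (pi_minus (L s)) (L s) n)" for s
  define W where "W s = (\<lambda>n. (1/2) *\<^sub>R (conv br (Rop (X s)) (\<lambda>n. -(1/2) *\<^sub>R L s n) n
                 + conv br (X s) (Rop (\<lambda>n. -(1/2) *\<^sub>R L s n)) n))" for s
  define dl where "dl s = (\<lambda>n. -(1/2) *\<^sub>R l s n)" for s
  have nA0: "nice A0 M" unfolding A0_def M_def
    by (intro nice_add nice_conv nice_pi_minus nL nice_mono[OF nl]) (use N3 in simp)
  have nW: "nice W M" unfolding W_def M_def
    by (intro nice_scale nice_add nice_conv nice_Rop nX nL)
  have ndl: "nice dl N" unfolding dl_def by (intro nice_scale nl)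
  define g0 where "g0 s = P (A0 s) (X s)" for s
  define g1 where "g1 s = P (L s) (W s)" for s
  define g2 where "g2 s = P (Rop (X s)) (dl s)" for s
  define g3 where "g3 s = P (X s) (Rop (dl s))" for s
  have i0: "g0 integrable_on {0..2*pi}" unfolding g0_def by (rule int_P[OF nA0 nXM])
  have i1: "g1 integrable_on {0..2*pi}" unfolding g1_def by (rule int_P[OF nLM nW])
  have i2: "g2 integrable_on {0..2*pi}" unfolding g2_def by (rule int_P[OF nice_Rop[OF nX] ndl])
  have i3: "g3 integrable_on {0..2*pi}" unfolding g3_def by (rule int_P[OF nX nice_Rop[OF ndl]])
  have pw: "g0 s = g1 s + g1 s + (g2 s + g3 s)" for s
  proof -
    have "g0 s = 2 * g1 s + g2 s + g3 s"
      unfolding g0_def g1_def g2_def g3_def A0_def W_def dl_def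
      by (rule pw_main[OF N3]) (use nL nX l_nice in \<open>auto simp: nice_def\<close>)
    then show ?thesis by simp
  qed
  have LHS: "Gpair fm (\<lambda>s n. dsig (\<lambda>t. pi_minus (L t)) s n + Gbr br (\<lambda>t. pi_minus (L t)) L s n) X
      = integral {0..2*pi} g0"
    unfolding Gpair_def ds1 Gbr_def g0_def A0_def ..
  have I: "integral {0..2*pi} g0 = 2 * integral {0..2*pi} g1 + (integral {0..2*pi} g2 + integral {0..2*pi} g3)"
  proof -
    have e: "g0 = (\<lambda>s. g1 s + g1 s + (g2 s + g3 s))" by (rule ext) (rule pw)
    have "integral {0..2*pi} g0 = integral {0..2*pi} (\<lambda>s. g1 s + g1 s + (g2 s + g3 s))"
      by (simp only: e)
    also have "\<dots> = integral {0..2*pi} (\<lambda>s. g1 s + g1 s) + integral {0..2*pi} (\<lambda>s. g2 s + g3 s)"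
      by (rule integral_add) (intro integrable_add i1 i2 i3)+
    also have "\<dots> = 2 * integral {0..2*pi} g1 + (integral {0..2*pi} g2 + integral {0..2*pi} g3)"
      using integral_add[OF i1 i1] integral_add[OF i2 i3] by simp
    finally show ?thesis .
  qed
  have RHS: "Rpoisson br fm pr (\<lambda>Mh. hpair fm Mh (X, 0)) (P_minus fm) (L, 1)
     = 2 * (integral {0..2*pi} g1 + 1 * (of_real (1/2) * (integral {0..2*pi} g2 + integral {0..2*pi} g3)))"
    unfolding Rpoisson_def g1 g2
    unfolding hRbr_def hR_def hbr_def hadd_def hscale_def hpair_def omega_def
      GR_def Gbr_def ds2 ds3 fst_conv snd_conv
    unfolding Gpair_def g1_def g2_def g3_def W_def dl_def
    by (simp add: scaleR_conv_of_real)
  show ?thesis unfolding LHS RHS I by simp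
qed

end

theorem lemma3:
  fixes br :: "'g::real_normed_vector \<Rightarrow> 'g \<Rightarrow> 'g"
    and fm :: "'g \<Rightarrow> 'g \<Rightarrow> complex"
    and pr :: "int \<Rightarrow> 'g \<Rightarrow> 'g"
    and A Pim :: "real \<Rightarrow> 'g"
  assumes "lie_data br fm pr"
    and "smooth_S1 A" and "smooth_S1 Pim"
  shows "\<forall>X. in_G pr X \<longrightarrow>
     Gpair fm (\<lambda>s n. dsig (\<lambda>t. pi_minus (lax br pr A Pim t)) s n
                     + Gbr br (\<lambda>t. pi_minus (lax br pr A Pim t)) (lax br pr A Pim) s n) X
     = Rpoisson br fm pr (\<lambda>Mh. hpair fm Mh (X, 0)) (P_minus fm) (lax br pr A Pim, 1)"
proof -
  interpret LDL br fm pr A Pim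
    by (rule LDL.intro[OF LD.intro LDL_axioms.intro]) (rule assms)+
  show ?thesis using main by blast
qed

end
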